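(* Let $T$ be a tree with $ex(T)\ge1$ satisfying $\dim_{1,f}(T)=\dim_f(T)$. Then: (a) if $v\in M_2(T)$, then every terminal vertex of $v$ is adjacent to $v$ in $T$; (b) $T$ contains no major vertex of terminal degree one; (c) $T$ contains neither a major vertex of terminal degree zero nor an interior degree-two vertex.
   Context: $d(x,y)$ is the distance in the tree. For a function $g$ on $V(T)$ and $U\subseteq V(T)$, $g(U)=\sum_{s\in U}g(s)$. $R\{x,y\}=\{z: d(x,z)\ne d(y,z)\}$; $g:V(T)\to[0,1]$ is a resolving function if $g(R\{x,y\})\ge1$ for all distinct $x,y$; $\dim_f(T)$ is the minimum of $g(V(T))$ over resolving functions. $d_1(x,y)=\min\{d(x,y),2\}$, $R_1\{x,y\}=\{z: d_1(x,z)\neq d_1(y,z)\}$; $h:V(T)\to[0,1]$ is a $1$-truncated resolving function if $h(R_1\{x,y\})\ge 1$ for all distinct $x,y$, and $\dim_{1,f}(T)$ is the minimum of $h(V(T))$ over such $h$. A leaf has degree one; a major vertex has degree at least three. A leaf $\ell$ is a terminal vertex of a major vertex $v$ if $d(\ell,v)<d(\ell,w)$ for every other major vertex $w$; the terminal degree $ter(v)$ is the number of terminal vertices of $v$; an exterior major vertex is a major vertex with $ter(v)>0$. $M(T)$ is the set of exterior major vertices, $ex(T)=|M(T)|$, $M_2(T)=\{w\in M(T): ter(w)\ge2\}$. An interior degree-two vertex is a vertex of degree $2$ such that the shortest path from it to any terminal vertex includes a major vertex. *)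

theory Defs
  imports Complex_Main
begin

definition is_walk :: "('a \<Rightarrow> 'a \<Rightarrow> bool) \<Rightarrow> 'a list \<Rightarrow> bool" where
  "is_walk E xs \<longleftrightarrow> xs \<noteq> [] \<and> (\<forall>i. Suc i < length xs \<longrightarrow> E (xs ! i) (xs ! Suc i))"

definition is_tree :: "'a set \<Rightarrow> ('a \<Rightarrow> 'a \<Rightarrow> bool) \<Rightarrow> bool" where
  "is_tree V E \<longleftrightarrow> finite V \<and> V \<noteq> {}
     \<and> (\<forall>x y. E x y \<longrightarrow> x \<in> V \<and> y \<in> V)
     \<and> (\<forall>x y. E x y \<longrightarrow> E y x)
     \<and> (\<forall>x. \<not> E x x)
     \<and> (\<forall>x\<in>V. \<forall>y\<in>V. \<exists>xs. is_walk E xs \<and> hd xs = x \<and> last xs = y)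
     \<and> \<not> (\<exists>xs. is_walk E xs \<and> distinct xs \<and> length xs \<ge> 3 \<and> E (last xs) (hd xs))"

definition tdist :: "('a \<Rightarrow> 'a \<Rightarrow> bool) \<Rightarrow> 'a \<Rightarrow> 'a \<Rightarrow> nat" where
  "tdist E x y = (LEAST n. \<exists>xs. is_walk E xs \<and> hd xs = x \<and> last xs = y \<and> length xs = Suc n)"

definition tdeg :: "('a \<Rightarrow> 'a \<Rightarrow> bool) \<Rightarrow> 'a \<Rightarrow> nat" where
  "tdeg E x = card {y. E x y}"

definition is_leaf :: "'a set \<Rightarrow> ('a \<Rightarrow> 'a \<Rightarrow> bool) \<Rightarrow> 'a \<Rightarrow> bool" where
  "is_leaf V E x \<longleftrightarrow> x \<in> V \<and> tdeg E x = 1"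

definition is_major :: "'a set \<Rightarrow> ('a \<Rightarrow> 'a \<Rightarrow> bool) \<Rightarrow> 'a \<Rightarrow> bool" where
  "is_major V E x \<longleftrightarrow> x \<in> V \<and> tdeg E x \<ge> 3"

definition is_terminal :: "'a set \<Rightarrow> ('a \<Rightarrow> 'a \<Rightarrow> bool) \<Rightarrow> 'a \<Rightarrow> 'a \<Rightarrow> bool" where
  "is_terminal V E l v \<longleftrightarrow> is_leaf V E l \<and> is_major V E v
     \<and> (\<forall>w. is_major V E w \<and> w \<noteq> v \<longrightarrow> tdist E l v < tdist E l w)"

definition ter :: "'a set \<Rightarrow> ('a \<Rightarrow> 'a \<Rightarrow> bool) \<Rightarrow> 'a \<Rightarrow> nat" where
  "ter V E v = card {l. is_terminal V E l v}"

definition ext_major :: "'a set \<Rightarrow> ('a \<Rightarrow> 'a \<Rightarrow> bool) \<Rightarrow> 'a set" where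
  "ext_major V E = {v. is_major V E v \<and> ter V E v > 0}"

definition ex_num :: "'a set \<Rightarrow> ('a \<Rightarrow> 'a \<Rightarrow> bool) \<Rightarrow> nat" where
  "ex_num V E = card (ext_major V E)"

definition M2 :: "'a set \<Rightarrow> ('a \<Rightarrow> 'a \<Rightarrow> bool) \<Rightarrow> 'a set" where
  "M2 V E = {w \<in> ext_major V E. ter V E w \<ge> 2}"

definition interior_deg2 :: "'a set \<Rightarrow> ('a \<Rightarrow> 'a \<Rightarrow> bool) \<Rightarrow> 'a \<Rightarrow> bool" where
  "interior_deg2 V E u \<longleftrightarrow> u \<in> V \<and> tdeg E u = 2
     \<and> (\<forall>l v xs. is_terminal V E l v \<and> is_walk E xs \<and> hd xs = u \<and> last xs = l
            \<and> length xs = Suc (tdist E u l) \<longrightarrow> (\<exists>z\<in>set xs. is_major V E z))"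

definition resolving_set :: "('a \<Rightarrow> 'a \<Rightarrow> bool) \<Rightarrow> 'a set \<Rightarrow> 'a \<Rightarrow> 'a \<Rightarrow> 'a set" where
  "resolving_set E V x y = {z \<in> V. tdist E x z \<noteq> tdist E y z}"

definition resolving_fun :: "'a set \<Rightarrow> ('a \<Rightarrow> 'a \<Rightarrow> bool) \<Rightarrow> ('a \<Rightarrow> real) \<Rightarrow> bool" where
  "resolving_fun V E g \<longleftrightarrow> (\<forall>s\<in>V. 0 \<le> g s \<and> g s \<le> 1)
     \<and> (\<forall>x\<in>V. \<forall>y\<in>V. x \<noteq> y \<longrightarrow> sum g (resolving_set E V x y) \<ge> 1)"

definition frac_dim :: "'a set \<Rightarrow> ('a \<Rightarrow> 'a \<Rightarrow> bool) \<Rightarrow> real" where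
  "frac_dim V E = Inf {sum g V | g. resolving_fun V E g}"

definition tdist1 :: "('a \<Rightarrow> 'a \<Rightarrow> bool) \<Rightarrow> 'a \<Rightarrow> 'a \<Rightarrow> nat" where
  "tdist1 E x y = min (tdist E x y) 2"

definition resolving_set1 :: "('a \<Rightarrow> 'a \<Rightarrow> bool) \<Rightarrow> 'a set \<Rightarrow> 'a \<Rightarrow> 'a \<Rightarrow> 'a set" where
  "resolving_set1 E V x y = {z \<in> V. tdist1 E x z \<noteq> tdist1 E y z}"

definition resolving_fun1 :: "'a set \<Rightarrow> ('a \<Rightarrow> 'a \<Rightarrow> bool) \<Rightarrow> ('a \<Rightarrow> real) \<Rightarrow> bool" where
  "resolving_fun1 V E h \<longleftrightarrow> (\<forall>s\<in>V. 0 \<le> h s \<and> h s \<le> 1)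
     \<and> (\<forall>x\<in>V. \<forall>y\<in>V. x \<noteq> y \<longrightarrow> sum h (resolving_set1 E V x y) \<ge> 1)"

definition frac_dim1 :: "'a set \<Rightarrow> ('a \<Rightarrow> 'a \<Rightarrow> bool) \<Rightarrow> real" where
  "frac_dim1 V E = Inf {sum h V | h. resolving_fun1 V E h}"

end

theory Submission
  imports Defs
begin


fun wk :: "('a \<Rightarrow> 'a \<Rightarrow> bool) \<Rightarrow> 'a list \<Rightarrow> bool" where
  "wk E [] = True"
| "wk E [x] = True"
| "wk E (x # y # xs) = (E x y \<and> wk E (y # xs))"

fun eds :: "'a list \<Rightarrow> ('a \<times> 'a) set" where
  "eds [] = {}"
| "eds [x] = {}"
| "eds (x # y # xs) = insert (x, y) (eds (y # xs))"

lemma wk_Cons2: "wk E (x # xs) \<longleftrightarrow> (xs = [] \<or> (E x (hd xs) \<and> wk E xs))"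
  by (cases xs) auto

lemma wk_nth: "wk E xs \<longleftrightarrow> (\<forall>i. Suc i < length xs \<longrightarrow> E (xs ! i) (xs ! Suc i))"
proof (induction xs)
  case (Cons x xs)
  show ?case
  proof (cases xs)
    case (Cons y zs)
    have "(\<forall>i. Suc i < length (x # xs) \<longrightarrow> E ((x # xs) ! i) ((x # xs) ! Suc i))
       \<longleftrightarrow> E x y \<and> (\<forall>i. Suc i < length xs \<longrightarrow> E (xs ! i) (xs ! Suc i))"
      (is "?L \<longleftrightarrow> ?R")
    proof
      assume ?L
      then show ?R using Cons by (metis Suc_less_eq length_Cons nth_Cons_0 nth_Cons_Suc zero_less_Suc)
    next
      assume R: ?R
      show ?L
      proof (intro allI impI)
        fix i assume "Suc i < length (x # xs)"
        then show "E ((x # xs) ! i) ((x # xs) ! Suc i)" using R Cons by (cases i) auto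
      qed
    qed
    then show ?thesis using Cons.IH Cons by simp
  qed simp
qed simp

lemma is_walk_wk: "is_walk E xs \<longleftrightarrow> xs \<noteq> [] \<and> wk E xs"
  unfolding is_walk_def wk_nth by simp

lemma wk_append: "wk E (xs @ ys) \<longleftrightarrow> wk E xs \<and> wk E ys \<and> (xs \<noteq> [] \<and> ys \<noteq> [] \<longrightarrow> E (last xs) (hd ys))"
proof (induction xs)
  case (Cons x xs)
  then show ?case by (cases xs; cases ys) (auto simp: wk_Cons2)
qed simp

lemma eds_Cons2: "eds (x # xs) = (if xs = [] then {} else insert (x, hd xs) (eds xs))"
  by (cases xs) auto

lemma eds_append: "eds (xs @ ys) = eds xs \<union> eds ys \<union> (if xs \<noteq> [] \<and> ys \<noteq> [] then {(last xs, hd ys)} else {})"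
proof (induction xs)
  case (Cons x xs)
  then show ?case by (cases xs; cases ys) (auto simp: eds_Cons2)
qed simp

lemma eds_set: "(a, b) \<in> eds xs \<Longrightarrow> a \<in> set xs \<and> b \<in> set xs"
  by (induction xs rule: eds.induct) auto

lemma wk_rev: "(\<And>x y. E x y \<Longrightarrow> E y x) \<Longrightarrow> wk E xs \<Longrightarrow> wk E (rev xs)"
proof (induction xs)
  case (Cons x xs)
  then show ?case by (cases xs) (auto simp: wk_append wk_Cons2)
qed simp

lemma eds_rev: "(a, b) \<in> eds (rev xs) \<Longrightarrow> (b, a) \<in> eds xs"
proof (induction xs)
  case (Cons x xs)
  then show ?case by (cases xs) (auto simp: eds_append eds_Cons2 split: if_splits)
qed simp

lemma reduce_path:
  assumes "wk E xs" "xs \<noteq> []"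
  shows "\<exists>ys. wk E ys \<and> distinct ys \<and> ys \<noteq> [] \<and> hd ys = hd xs \<and> last ys = last xs
     \<and> set ys \<subseteq> set xs \<and> eds ys \<subseteq> eds xs"
  using assms
proof (induction "length xs" arbitrary: xs rule: less_induct)
  case less
  show ?case
  proof (cases "distinct xs")
    case True
    then show ?thesis using less.prems by blast
  next
    case False
    then obtain as y bs cs where xs: "xs = as @ [y] @ bs @ [y] @ cs"
      using not_distinct_decomp by blast
    define zs where "zs = as @ [y] @ cs"
    have len: "length zs < length xs" unfolding zs_def xs by simp
    have w1: "wk E ((as @ [y]) @ (bs @ [y] @ cs))" using less.prems(1) unfolding xs by simp
    then have a1: "wk E (as @ [y])" using wk_append[of E "as @ [y]" "bs @ [y] @ cs"] by blast
    have "wk E ((as @ [y] @ bs) @ ([y] @ cs))" using less.prems(1) unfolding xs by simp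
    then have a2: "wk E ([y] @ cs)" using wk_append[of E "as @ [y] @ bs" "[y] @ cs"] by blast
    have wz: "wk E ((as @ [y]) @ cs)"
      using a1 a2 unfolding wk_append by (cases cs) auto
    then have wz: "wk E zs" unfolding zs_def by simp
    have e1: "eds (y # cs) \<subseteq> eds ((y # bs) @ (y # cs))"
      using eds_append[of "y # bs" "y # cs"] by blast
    have e2: "eds (as @ [y] @ bs @ [y] @ cs) = eds as \<union> eds ((y # bs) @ (y # cs)) \<union> (if as \<noteq> [] then {(last as, y)} else {})"
      using eds_append[of as "(y # bs) @ (y # cs)"] by simp
    have e3: "eds (as @ [y] @ cs) = eds as \<union> eds (y # cs) \<union> (if as \<noteq> [] then {(last as, y)} else {})"
      using eds_append[of as "y # cs"] by simp
    have ez: "eds zs \<subseteq> eds xs" unfolding zs_def xs e2 e3 using e1 by blast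
    have hz: "hd zs = hd xs" unfolding zs_def xs by (cases as) auto
    have lz: "last zs = last xs" unfolding zs_def xs by (cases cs) auto
    have sz: "set zs \<subseteq> set xs" unfolding zs_def xs by auto
    have "zs \<noteq> []" unfolding zs_def by simp
    from less.hyps[OF len wz this] hz lz sz ez show ?thesis by (metis order_trans)
  qed
qed



locale tctx =
  fixes V :: "'a set" and E :: "'a \<Rightarrow> 'a \<Rightarrow> bool"
  assumes tree: "is_tree V E"
begin

lemma finV: "finite V" using tree unfolding is_tree_def by blast
lemma Ein: "E x y \<Longrightarrow> x \<in> V \<and> y \<in> V" using tree unfolding is_tree_def by blast
lemma Esym: "E x y \<Longrightarrow> E y x" using tree unfolding is_tree_def by blast
lemma Eirr: "\<not> E x x" using tree unfolding is_tree_def by blast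
lemma conn: "x \<in> V \<Longrightarrow> y \<in> V \<Longrightarrow> \<exists>xs. is_walk E xs \<and> hd xs = x \<and> last xs = y"
  using tree unfolding is_tree_def by blast
lemma nocyc: "is_walk E xs \<Longrightarrow> distinct xs \<Longrightarrow> length xs \<ge> 3 \<Longrightarrow> E (last xs) (hd xs) \<Longrightarrow> False"
  using tree unfolding is_tree_def by blast

abbreviation d where "d \<equiv> tdist E"

lemma walk_dist_le:
  assumes "is_walk E xs" "hd xs = x" "last xs = y"
  shows "d x y \<le> length xs - 1"
proof -
  have "xs \<noteq> []" using assms(1) unfolding is_walk_def by simp
  then have "length xs = Suc (length xs - 1)" by simp
  then show ?thesis unfolding tdist_def using assms by (metis (mono_tags, lifting) Least_le)
qed

lemma dist_walk:
  assumes "x \<in> V" "y \<in> V"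
  shows "\<exists>xs. is_walk E xs \<and> hd xs = x \<and> last xs = y \<and> length xs = Suc (d x y)"
proof -
  obtain xs where xs: "is_walk E xs" "hd xs = x" "last xs = y" using conn assms by blast
  then have "xs \<noteq> []" unfolding is_walk_def by simp
  then have "\<exists>n xs. is_walk E xs \<and> hd xs = x \<and> last xs = y \<and> length xs = Suc n"
    using xs by (metis Suc_pred length_greater_0_conv)
  then show ?thesis unfolding tdist_def by (rule LeastI_ex)
qed

lemma d_refl[simp]: "d x x = 0"
proof -
  have "is_walk E [x]" unfolding is_walk_def by simp
  from walk_dist_le[OF this] show ?thesis by simp
qed

lemma d_zero: "x \<in> V \<Longrightarrow> y \<in> V \<Longrightarrow> d x y = 0 \<Longrightarrow> x = y"
  using dist_walk[of x y] by (auto simp: length_Suc_conv)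

lemma d_edge: "E x y \<Longrightarrow> d x y = 1"
proof -
  assume e: "E x y"
  have "is_walk E [x, y]" unfolding is_walk_def using e by (auto simp: less_Suc_eq)
  from walk_dist_le[OF this] have "d x y \<le> 1" by simp
  moreover have "d x y \<noteq> 0" using d_zero Ein[OF e] e Eirr by metis
  ultimately show ?thesis by simp
qed

lemma d_one: "x \<in> V \<Longrightarrow> y \<in> V \<Longrightarrow> d x y = 1 \<Longrightarrow> E x y"
proof -
  assume a: "x \<in> V" "y \<in> V" "d x y = 1"
  then obtain xs where xs: "is_walk E xs" "hd xs = x" "last xs = y" "length xs = 2"
    using dist_walk[of x y] by auto
  then obtain a b where "xs = [a, b]" by (auto simp: length_Suc_conv numeral_2_eq_2)
  then show ?thesis using xs unfolding is_walk_def by auto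
qed

lemma d_le1: "x \<in> V \<Longrightarrow> y \<in> V \<Longrightarrow> d x y \<le> 1 \<Longrightarrow> x = y \<or> E x y"
  using d_zero d_one by (metis le_eq_less_or_eq less_one)

lemma walk_rev: "is_walk E xs \<Longrightarrow> is_walk E (rev xs)"
  unfolding is_walk_wk using wk_rev[of E xs] Esym by auto

lemma d_sym: "x \<in> V \<Longrightarrow> y \<in> V \<Longrightarrow> d x y = d y x"
proof -
  have *: "d b a \<le> d a b" if ab: "a \<in> V" "b \<in> V" for a b
  proof -
    obtain xs where xs: "is_walk E xs" "hd xs = a" "last xs = b" "length xs = Suc (d a b)"
      using dist_walk[OF ab] by blast
    have "is_walk E (rev xs)" using walk_rev xs(1) .
    moreover have "xs \<noteq> []" using xs(1) unfolding is_walk_def by simp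
    ultimately show ?thesis using walk_dist_le[of "rev xs" b a] xs by (simp add: hd_rev last_rev)
  qed
  assume "x \<in> V" "y \<in> V" then show ?thesis using *[of x y] *[of y x] by simp
qed

lemma walk_join: "is_walk E xs \<Longrightarrow> is_walk E ys \<Longrightarrow> last xs = hd ys \<Longrightarrow> is_walk E (xs @ tl ys)"
  unfolding is_walk_wk
  by (cases ys) (auto simp: wk_append wk_Cons2)

lemma last_join: "ys \<noteq> [] \<Longrightarrow> last xs = hd ys \<Longrightarrow> xs \<noteq> [] \<Longrightarrow> last (xs @ tl ys) = last ys"
  by (cases ys) auto

lemma d_tri: "x \<in> V \<Longrightarrow> y \<in> V \<Longrightarrow> z \<in> V \<Longrightarrow> d x z \<le> d x y + d y z"
proof -
  assume a: "x \<in> V" "y \<in> V" "z \<in> V"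
  obtain xs where xs: "is_walk E xs" "hd xs = x" "last xs = y" "length xs = Suc (d x y)"
    using dist_walk a by blast
  obtain ys where ys: "is_walk E ys" "hd ys = y" "last ys = z" "length ys = Suc (d y z)"
    using dist_walk a by blast
  have w: "is_walk E (xs @ tl ys)" using walk_join xs ys by simp
  have ne: "xs \<noteq> []" "ys \<noteq> []" using xs ys unfolding is_walk_def by auto
  have "hd (xs @ tl ys) = x" using xs ne by simp
  moreover have "last (xs @ tl ys) = z" using xs ys ne
    using last_join[of ys xs] by simp
  ultimately have "d x z \<le> length (xs @ tl ys) - 1" using walk_dist_le w by blast
  then show ?thesis using xs ys ne by simp
qed

lemma d_adj: "E y w \<Longrightarrow> x \<in> V \<Longrightarrow> d x w \<le> d x y + 1"
proof -
  assume a: "E y w" "x \<in> V"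
  then have "y \<in> V" "w \<in> V" using Ein by auto
  then have "d x w \<le> d x y + d y w" using d_tri a by blast
  then show ?thesis using d_edge[OF a(1)] by simp
qed

lemma wk_setV: "wk E xs \<Longrightarrow> xs \<noteq> [] \<Longrightarrow> hd xs \<in> V \<Longrightarrow> set xs \<subseteq> V"
proof (induction xs)
  case (Cons x xs)
  then show ?case by (cases xs) (auto simp: wk_Cons2 dest: Ein)
qed simp

lemma walk_setV: "is_walk E xs \<Longrightarrow> hd xs \<in> V \<Longrightarrow> set xs \<subseteq> V"
  using wk_setV unfolding is_walk_wk by blast

lemma shortest_nth:
  assumes "x \<in> V" "y \<in> V" "is_walk E xs" "hd xs = x" "last xs = y" "length xs = Suc (d x y)"
    and "i \<le> d x y"
  shows "d x (xs ! i) = i"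
proof -
  have ne: "xs \<noteq> []" using assms unfolding is_walk_def by auto
  have inV: "xs ! j \<in> V" if "j < length xs" for j
    using walk_setV[OF assms(3)] assms(1,4) that by (metis nth_mem subsetD)
  have w1: "is_walk E (take (Suc i) xs)" using assms(3) assms(6,7) unfolding is_walk_def by auto
  have "hd (take (Suc i) xs) = x" using assms ne by simp
  moreover have "last (take (Suc i) xs) = xs ! i" using assms(6,7) by (subst last_conv_nth) (auto simp: min_def)
  ultimately have le: "d x (xs ! i) \<le> i" using walk_dist_le[OF w1] assms(6,7) by simp
  have w2: "is_walk E (drop i xs)" using assms(3) assms(6,7) unfolding is_walk_def by auto
  have "hd (drop i xs) = xs ! i" using assms(6,7) by (simp add: hd_drop_conv_nth)
  moreover have "last (drop i xs) = y" using assms(5,6,7) by simp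
  ultimately have le2: "d (xs ! i) y \<le> d x y - i" using walk_dist_le[OF w2] assms(6,7) by simp
  have "d x y \<le> d x (xs ! i) + d (xs ! i) y" using d_tri[of x "xs ! i" y] assms(1,2,6,7) inV[of i] by simp
  then have "d x y \<le> d x (xs ! i) + (d x y - i)" using le2 by (meson add_left_mono order_trans)
  then have "i \<le> d x (xs ! i)" using assms(7) by simp
  then show ?thesis using le by simp
qed

lemma shortest_distinct:
  assumes "x \<in> V" "y \<in> V" "is_walk E xs" "hd xs = x" "last xs = y" "length xs = Suc (d x y)"
  shows "distinct xs"
  unfolding distinct_conv_nth
proof (intro allI impI)
  fix i j assume "i < length xs" "j < length xs" "i \<noteq> j"
  then have "i \<le> d x y" "j \<le> d x y" using assms(6) by auto
  then have "d x (xs ! i) = i" "d x (xs ! j) = j" using shortest_nth[OF assms] by blast+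
  then show "xs ! i \<noteq> xs ! j" using \<open>i \<noteq> j\<close> by metis
qed

lemma shortest_set:
  assumes "x \<in> V" "y \<in> V" "is_walk E xs" "hd xs = x" "last xs = y" "length xs = Suc (d x y)"
    and "z \<in> set xs"
  shows "d x z \<le> d x y"
proof -
  obtain i where "i < length xs" "z = xs ! i" using assms(7) by (metis in_set_conv_nth)
  then show ?thesis using shortest_nth[OF assms(1-6), of i] assms(6) by simp
qed

lemma shortest_set_eq:
  assumes "x \<in> V" "y \<in> V" "is_walk E xs" "hd xs = x" "last xs = y" "length xs = Suc (d x y)"
    and "z \<in> set xs" "d x z = d x y"
  shows "z = y"
proof -
  obtain i where i: "i < length xs" "z = xs ! i" using assms(7) by (metis in_set_conv_nth)
  then have "d x z = i" using shortest_nth[OF assms(1-6), of i] assms(6) by simp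
  then have "i = d x y" using assms(8) by simp
  then show ?thesis using i assms(5,6) by (metis diff_Suc_1 last_conv_nth list.size(3) nat.distinct(1))
qed

end


context tctx begin

lemma shortest_walk_obtain:
  assumes "x \<in> V" "y \<in> V"
  obtains P where "is_walk E P" "hd P = x" "last P = y" "length P = Suc (d x y)"
  using dist_walk[OF assms] by blast

lemma join_props:
  assumes "is_walk E P" "is_walk E Q" "hd P = hd Q" "length Q \<ge> 2"
  shows "is_walk E (rev P @ tl Q)" "hd (rev P @ tl Q) = last P" "last (rev P @ tl Q) = last Q"
    "set (rev P @ tl Q) \<subseteq> set P \<union> set Q"
proof -
  have neP: "P \<noteq> []" and neQ: "Q \<noteq> []" using assms unfolding is_walk_def by auto
  show "is_walk E (rev P @ tl Q)" using walk_join[OF walk_rev[OF assms(1)] assms(2)] neP assms(3)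
    by (simp add: last_rev)
  show "hd (rev P @ tl Q) = last P" using neP by (simp add: hd_rev)
  show "last (rev P @ tl Q) = last Q" using last_join[of Q "rev P"] neP neQ assms(3)
    by (simp add: last_rev)
  show "set (rev P @ tl Q) \<subseteq> set P \<union> set Q" using neQ by (cases Q) auto
qed

lemma unique_pred:
  assumes x: "x \<in> V" and z: "z \<in> V" and e1: "E z w1" and e2: "E z w2"
    and l1: "d x w1 < d x z" and l2: "d x w2 < d x z"
  shows "w1 = w2"
proof (rule ccontr)
  assume ne: "w1 \<noteq> w2"
  have w1V: "w1 \<in> V" and w2V: "w2 \<in> V" using e1 e2 Ein by auto
  have "d x z \<le> d x w1 + 1" using d_adj[OF Esym[OF e1] x] .
  have "d x z \<le> d x w2 + 1" using d_adj[OF Esym[OF e2] x] .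
  then have eq: "d x w1 = d x w2" using l1 l2 \<open>d x z \<le> d x w1 + 1\<close> by linarith
  obtain P1 where P1: "is_walk E P1" "hd P1 = x" "last P1 = w1" "length P1 = Suc (d x w1)"
    using shortest_walk_obtain[OF x w1V] by blast
  obtain P2 where P2: "is_walk E P2" "hd P2 = x" "last P2 = w2" "length P2 = Suc (d x w2)"
    using shortest_walk_obtain[OF x w2V] by blast
  have "d x w2 \<noteq> 0"
  proof
    assume "d x w2 = 0"
    then have "w1 = x" "w2 = x" using d_zero x w1V w2V eq by auto
    then show False using ne by simp
  qed
  then have len2: "length P2 \<ge> 2" using P2(4) by simp
  have zn1: "z \<notin> set P1" using shortest_set[OF x w1V P1, of z] l1 by linarith
  have zn2: "z \<notin> set P2" using shortest_set[OF x w2V P2, of z] l2 by linarith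
  have hh: "hd P1 = hd P2" using P1(2) P2(2) by simp
  note J = join_props[OF P1(1) P2(1) hh len2]
  have wW: "wk E (rev P1 @ tl P2)" "rev P1 @ tl P2 \<noteq> []" using J(1) P1(2) P2(2) unfolding is_walk_wk by auto
  obtain ys where ys0: "wk E ys" "distinct ys" "ys \<noteq> []" "hd ys = hd (rev P1 @ tl P2)"
     "last ys = last (rev P1 @ tl P2)" "set ys \<subseteq> set (rev P1 @ tl P2)"
    using reduce_path[OF wW] by blast
  have ys: "wk E ys" "distinct ys" "ys \<noteq> []" "hd ys = w1" "last ys = w2"
     "set ys \<subseteq> set P1 \<union> set P2"
    using ys0 J(2,3,4) P1(3) P2(3) by auto
  have zys: "z \<notin> set ys" using ys(6) zn1 zn2 by blast
  have "length ys \<noteq> 1"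
  proof
    assume "length ys = 1"
    then obtain a where "ys = [a]" by (auto simp: length_Suc_conv)
    then show False using ys(4,5) ne by simp
  qed
  then have l3: "length (z # ys) \<ge> 3" using ys(3) by (cases ys) (auto simp: Suc_le_eq)
  have "is_walk E (z # ys)" unfolding is_walk_wk using ys e1 by (simp add: wk_Cons2)
  moreover have "distinct (z # ys)" using ys(2) zys by simp
  moreover have "E (last (z # ys)) (hd (z # ys))" using ys(3,5) Esym[OF e2] by simp
  ultimately show False using nocyc[OF _ _ l3] by blast
qed

lemma parity:
  assumes x: "x \<in> V" and e: "E z w"
  shows "d x z \<noteq> d x w"
proof
  assume eq: "d x z = d x w"
  have zV: "z \<in> V" and wV: "w \<in> V" using e Ein by auto
  have zw: "z \<noteq> w" using e Eirr by auto
  have "d x w \<noteq> 0"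
  proof
    assume "d x w = 0"
    then have "z = x" "w = x" using d_zero x zV wV eq by auto
    then show False using zw by simp
  qed
  obtain P where P: "is_walk E P" "hd P = x" "last P = z" "length P = Suc (d x z)"
    using shortest_walk_obtain[OF x zV] by blast
  obtain Q where Q: "is_walk E Q" "hd Q = x" "last Q = w" "length Q = Suc (d x w)"
    using shortest_walk_obtain[OF x wV] by blast
  have len2: "length Q \<ge> 2" using Q(4) \<open>d x w \<noteq> 0\<close> by simp
  have wP: "w \<notin> set P" using shortest_set_eq[OF x zV P, of w] eq zw by auto
  have zQ: "z \<notin> set Q" using shortest_set_eq[OF x wV Q, of z] eq zw by auto
  have hh: "hd P = hd Q" using P(2) Q(2) by simp
  note J = join_props[OF P(1) Q(1) hh len2]
  define W where "W = rev P @ tl Q"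
  have wW: "wk E W" "W \<noteq> []" using J(1) P(2) Q(2) unfolding is_walk_wk W_def by auto
  have edW: "(a \<in> set P \<and> b \<in> set P) \<or> (a \<in> set Q \<and> b \<in> set Q)" if ab: "(a, b) \<in> eds W" for a b
  proof -
    have neP: "P \<noteq> []" and neQ: "Q \<noteq> []" using P Q unfolding is_walk_def by auto
    obtain q qs where Qc: "Q = q # qs" using neQ by (cases Q) auto
    have "qs \<noteq> []" using len2 Qc by auto
    have "(a, b) \<in> eds (rev P) \<or> (a, b) \<in> eds qs \<or> (a, b) = (last (rev P), hd qs)"
      using ab unfolding W_def Qc eds_append by (auto split: if_splits)
    moreover have "last (rev P) = q" using P(2) Q(2) Qc neP by (simp add: last_rev)
    moreover have "(a, b) \<in> eds (rev P) \<Longrightarrow> a \<in> set P \<and> b \<in> set P"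
      using eds_rev eds_set by fastforce
    moreover have "(a, b) \<in> eds qs \<Longrightarrow> a \<in> set Q \<and> b \<in> set Q"
      using eds_set Qc by fastforce
    moreover have "hd qs \<in> set Q" using Qc \<open>qs \<noteq> []\<close> by simp
    moreover have "q \<in> set Q" using Qc by simp
    ultimately show ?thesis by auto
  qed
  obtain ys where ys0: "wk E ys" "distinct ys" "ys \<noteq> []" "hd ys = hd W"
     "last ys = last W" "eds ys \<subseteq> eds W"
    using reduce_path[OF wW] by blast
  have ys: "wk E ys" "distinct ys" "ys \<noteq> []" "hd ys = z" "last ys = w"
     "eds ys \<subseteq> eds W"
    using ys0 J(2,3) P(3) Q(3) unfolding W_def by auto
  have "length ys \<noteq> 1"
  proof
    assume "length ys = 1"
    then obtain a where "ys = [a]" by (auto simp: length_Suc_conv)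
    then show False using ys(4,5) zw by simp
  qed
  moreover have "length ys \<noteq> 2"
  proof
    assume "length ys = 2"
    then obtain a b where "ys = [a, b]" by (auto simp: length_Suc_conv numeral_2_eq_2)
    then have "ys = [z, w]" using ys(4,5) by simp
    then have "(z, w) \<in> eds W" using ys(6) by auto
    then show False using edW wP zQ by blast
  qed
  ultimately have "length ys \<ge> 3" using ys(3) by (cases "length ys") auto
  moreover have "is_walk E ys" using ys unfolding is_walk_wk by simp
  moreover have "E (last ys) (hd ys)" using ys Esym[OF e] by simp
  ultimately show False using nocyc ys(2) by blast
qed

lemma nbr_dist:
  assumes x: "x \<in> V" and e: "E z w"
  shows "d x w = d x z + 1 \<or> d x z = d x w + 1"
  using parity[OF x e] d_adj[OF e x] d_adj[OF Esym[OF e] x] by linarith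

lemma pred_exists:
  assumes x: "x \<in> V" and z: "z \<in> V" and ne: "z \<noteq> x"
  shows "\<exists>w. E z w \<and> d x w + 1 = d x z"
proof -
  obtain P where P: "is_walk E P" "hd P = x" "last P = z" "length P = Suc (d x z)"
    using shortest_walk_obtain[OF x z] by blast
  have k: "d x z \<noteq> 0" using d_zero[OF x z] ne by auto
  define k where "k = d x z"
  have kpos: "k \<ge> 1" using k k_def by simp
  have "Suc (k - 1) < length P" using P(4) kpos k_def by simp
  then have "E (P ! (k - 1)) (P ! Suc (k - 1))" using P(1) unfolding is_walk_def by blast
  moreover have "P ! Suc (k - 1) = z"
  proof -
    have "P \<noteq> []" using P(4) by auto
    then have "last P = P ! (length P - 1)" by (rule last_conv_nth)
    then show ?thesis using P(3,4) kpos k_def by simp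
  qed
  moreover have "d x (P ! (k - 1)) = k - 1" using shortest_nth[OF x z P, of "k - 1"] k_def by simp
  ultimately have "E z (P ! (k - 1))" "d x (P ! (k - 1)) + 1 = d x z" using kpos k_def Esym by auto
  then show ?thesis by blast
qed

definition nb where "nb x = {y. E x y}"

lemma nb_sub: "nb x \<subseteq> V" unfolding nb_def using Ein by auto
lemma nb_fin: "finite (nb x)" using nb_sub finV finite_subset by blast
lemma tdeg_nb: "tdeg E x = card (nb x)" unfolding tdeg_def nb_def by simp

lemma leaf_nb: "tdeg E l = 1 \<Longrightarrow> E l p \<Longrightarrow> nb l = {p}"
proof -
  assume a: "tdeg E l = 1" "E l p"
  then have "card (nb l) = 1" unfolding tdeg_nb by simp
  then obtain c where c: "nb l = {c}" by (rule card_1_singletonE)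
  moreover have "p \<in> nb l" using a unfolding nb_def by simp
  ultimately show ?thesis by simp
qed

lemma leaf_dist:
  assumes l: "tdeg E l = 1" and e: "E l p" and z: "z \<in> V" and ne: "z \<noteq> l"
  shows "d z l = d z p + 1"
proof -
  have lV: "l \<in> V" using e Ein by auto
  from pred_exists[OF z lV ne[symmetric]] obtain w where w: "E l w" "d z w + 1 = d z l" by blast
  then have "w = p" using leaf_nb[OF l e] unfolding nb_def by auto
  then show ?thesis using w by simp
qed

lemma closed_set:
  assumes x0: "x0 \<in> X" "x0 \<in> V" and cl: "\<And>a b. a \<in> X \<Longrightarrow> E a b \<Longrightarrow> b \<in> X"
  shows "V \<subseteq> X"
proof
  fix z assume z: "z \<in> V"
  obtain xs where xs: "is_walk E xs" "hd xs = x0" "last xs = z" using conn[OF x0(2) z] by blast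
  have ne: "xs \<noteq> []" using xs unfolding is_walk_def by simp
  have "\<forall>i < length xs. xs ! i \<in> X"
  proof (intro allI impI)
    fix i assume "i < length xs"
    then show "xs ! i \<in> X"
    proof (induction i)
      case 0 then show ?case using xs(2) x0 ne by (simp add: hd_conv_nth)
    next
      case (Suc i)
      then have "E (xs ! i) (xs ! Suc i)" using xs(1) unfolding is_walk_def by simp
      then show ?case using Suc cl by simp
    qed
  qed
  moreover have "last xs = xs ! (length xs - 1)" using ne by (rule last_conv_nth)
  ultimately show "z \<in> X" using xs(3) ne by simp
qed

end


locale tctx2 = tctx +
  assumes major: "\<exists>v. is_major V E v"
begin

definition Lf where "Lf = {l \<in> V. tdeg E l = 1}"

lemma Lf_fin: "finite Lf" unfolding Lf_def using finV by simp

lemma nb_ne: assumes z: "z \<in> V" shows "nb z \<noteq> {}"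
proof -
  obtain v where v: "is_major V E v" using major by blast
  then have vV: "v \<in> V" and dv: "tdeg E v \<ge> 3" unfolding is_major_def by auto
  show ?thesis
  proof (cases "z = v")
    case True
    then show ?thesis using dv unfolding tdeg_nb by auto
  next
    case False
    then obtain w where "E z w" using pred_exists[OF vV z] by blast
    then show ?thesis unfolding nb_def by auto
  qed
qed

lemma side_max:
  assumes x: "x \<in> V" and y: "y \<in> V" and z0: "z0 \<in> V" "d x z0 < d y z0" "z0 \<notin> X"
  shows "\<exists>z \<in> V. d x z < d y z \<and> z \<notin> X \<and> card (nb z - X) \<le> 1"
proof -
  define A where "A = {z \<in> V. d x z < d y z \<and> z \<notin> X}"
  have finA: "finite A" unfolding A_def using finV by simp
  have z0A: "z0 \<in> A" unfolding A_def using z0 by simp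
  define m where "m = Max ((\<lambda>z. d y z) ` A)"
  have "m \<in> (\<lambda>z. d y z) ` A" unfolding m_def using finA z0A by (intro Max_in) auto
  then obtain z where zA: "z \<in> A" and zm: "d y z = m" by auto
  have zmax: "d y a \<le> d y z" if aA: "a \<in> A" for a
  proof -
    have "d y a \<le> m" unfolding m_def using finA aA by (auto intro: Max_ge)
    then show ?thesis using zm by simp
  qed
  have zV: "z \<in> V" and zl: "d x z < d y z" and zX: "z \<notin> X" using zA unfolding A_def by auto
  have up: "d y w < d y z" if w: "w \<in> nb z - X" for w
  proof (rule ccontr)
    assume "\<not> d y w < d y z"
    have e: "E z w" using w unfolding nb_def by simp
    then have wV: "w \<in> V" using Ein by auto
    have "d y w = d y z + 1" using nbr_dist[OF y e] \<open>\<not> d y w < d y z\<close> by linarith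
    moreover have "d x w \<le> d x z + 1" using d_adj[OF e x] .
    ultimately have "w \<in> A" unfolding A_def using wV w zl by auto
    then have "d y w \<le> d y z" using zmax by blast
    then show False using \<open>d y w = d y z + 1\<close> by simp
  qed
  have all: "\<forall>a\<in>nb z - X. \<forall>b\<in>nb z - X. a = b"
  proof (intro ballI)
    fix a b assume a: "a \<in> nb z - X" and b: "b \<in> nb z - X"
    show "a = b" using unique_pred[OF y zV _ _ up[OF a] up[OF b]] a b unfolding nb_def by auto
  qed
  have "finite (nb z - X)" using nb_fin by simp
  then have "card (nb z - X) \<le> 1" using card_le_Suc0_iff_eq[of "nb z - X"] all by simp
  then show ?thesis using zV zl zX by blast
qed

lemma side_leaf:
  assumes x: "x \<in> V" and y: "y \<in> V" and z0: "z0 \<in> V" "d x z0 < d y z0"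
  shows "\<exists>l \<in> Lf. d x l < d y l"
proof -
  obtain z where z: "z \<in> V" "d x z < d y z" "card (nb z - {}) \<le> 1"
    using side_max[OF x y z0, of "{}"] by blast
  have "card (nb z) \<noteq> 0" using nb_ne[OF z(1)] nb_fin by simp
  then have "tdeg E z = 1" using z(3) unfolding tdeg_nb by simp
  then show ?thesis using z unfolding Lf_def by blast
qed

definition par where "par l = (THE p. E l p)"

lemma par: assumes "l \<in> Lf" shows "E l (par l)" "E l p \<Longrightarrow> p = par l"
proof -
  have l: "l \<in> V" "tdeg E l = 1" using assms unfolding Lf_def by auto
  then have "card (nb l) = 1" unfolding tdeg_nb by simp
  then obtain c where c: "nb l = {c}" by (rule card_1_singletonE)
  then have ex: "\<exists>!p. E l p" unfolding nb_def by (auto simp: set_eq_iff)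
  show "E l (par l)" unfolding par_def using theI'[OF ex] .
  show "E l p \<Longrightarrow> p = par l" unfolding par_def using ex by (simp add: the1_equality)
qed

lemma no_major_small:
  assumes "x0 \<in> X" "x0 \<in> V" "\<And>a b. a \<in> X \<Longrightarrow> E a b \<Longrightarrow> b \<in> X" "\<And>a. a \<in> X \<Longrightarrow> tdeg E a \<le> 2"
  shows False
proof -
  have "V \<subseteq> X" using closed_set[OF assms(1,2,3)] .
  obtain v where "is_major V E v" using major by blast
  then show False using assms(4) \<open>V \<subseteq> X\<close> unfolding is_major_def by force
qed

lemma par_notleaf: assumes l: "l \<in> Lf" shows "par l \<notin> Lf"
proof
  assume p: "par l \<in> Lf"
  have e: "E l (par l)" using par(1)[OF l] .
  have lV: "l \<in> V" using l unfolding Lf_def by simp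
  show False
  proof (rule no_major_small[of l "{l, par l}"])
    show "l \<in> {l, par l}" "l \<in> V" by (auto simp: lV)
    show "b \<in> {l, par l}" if "a \<in> {l, par l}" "E a b" for a b
    proof -
      have e': "E (par l) l" using Esym[OF e] .
      have "a = l \<or> a = par l" using that(1) by simp
      then show ?thesis
      proof
        assume "a = l" then show ?thesis using par(2)[OF l] that(2) by simp
      next
        assume "a = par l"
        then have "b = par (par l)" "l = par (par l)" using par(2)[OF p] that(2) e' by auto
        then show ?thesis by simp
      qed
    qed
    show "tdeg E a \<le> 2" if "a \<in> {l, par l}" for a
      using that l p unfolding Lf_def by auto
  qed
qed

lemma card3_obtain:
  assumes "card A \<ge> 3"
  obtains a b c where "a \<in> A" "b \<in> A" "c \<in> A" "a \<noteq> b" "a \<noteq> c" "b \<noteq> c"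
proof -
  have fin: "finite A" using assms card.infinite by force
  have "A \<noteq> {}" using assms by auto
  then obtain a where a: "a \<in> A" by blast
  have "card (A - {a}) \<ge> 2" using assms a fin by (simp add: card_Diff_singleton)
  then have "A - {a} \<noteq> {}" by (intro notI) simp
  then obtain b where b: "b \<in> A - {a}" by blast
  have "card (A - {a} - {b}) \<ge> 1" using \<open>card (A - {a}) \<ge> 2\<close> b fin by (simp add: card_Diff_singleton)
  then have "A - {a} - {b} \<noteq> {}" by (intro notI) simp
  then obtain c where c: "c \<in> A - {a} - {b}" by blast
  show ?thesis using that a b c by blast
qed

lemma side_disj:
  assumes v: "v \<in> V" and e1: "E v u1" and e2: "E v u2" and l: "l \<in> V"
    and "d u1 l < d v l" "d u2 l < d v l"
  shows "u1 = u2"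
proof -
  have u1: "u1 \<in> V" and u2: "u2 \<in> V" using e1 e2 Ein by auto
  have "d l u1 < d l v" "d l u2 < d l v" using assms(5,6) d_sym[OF l u1] d_sym[OF l u2] d_sym[OF l v] by auto
  then show ?thesis using unique_pred[OF l v e1 e2] by blast
qed

lemma three_leaves: "card Lf \<ge> 3"
proof -
  obtain v where "is_major V E v" using major by blast
  then have v: "v \<in> V" "card (nb v) \<ge> 3" unfolding is_major_def tdeg_nb by auto
  obtain u1 u2 u3 where u: "u1 \<in> nb v" "u2 \<in> nb v" "u3 \<in> nb v" "u1 \<noteq> u2" "u1 \<noteq> u3" "u2 \<noteq> u3"
    using card3_obtain[OF v(2)] by blast
  have e: "E v u1" "E v u2" "E v u3" using u unfolding nb_def by auto
  have uV: "u1 \<in> V" "u2 \<in> V" "u3 \<in> V" using e Ein by auto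
  have s: "d v u > d u u" if "E v u" for u using d_edge[OF that] by simp
  obtain l1 where l1: "l1 \<in> Lf" "d u1 l1 < d v l1" using side_leaf[OF uV(1) v(1) uV(1)] s[OF e(1)] by auto
  obtain l2 where l2: "l2 \<in> Lf" "d u2 l2 < d v l2" using side_leaf[OF uV(2) v(1) uV(2)] s[OF e(2)] by auto
  obtain l3 where l3: "l3 \<in> Lf" "d u3 l3 < d v l3" using side_leaf[OF uV(3) v(1) uV(3)] s[OF e(3)] by auto
  have LV: "l1 \<in> V" "l2 \<in> V" "l3 \<in> V" using l1 l2 l3 unfolding Lf_def by auto
  have "l1 \<noteq> l2" using side_disj[OF v(1) e(1) e(2) LV(1)] l1 l2 u by auto
  moreover have "l1 \<noteq> l3" using side_disj[OF v(1) e(1) e(3) LV(1)] l1 l3 u by auto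
  moreover have "l2 \<noteq> l3" using side_disj[OF v(1) e(2) e(3) LV(2)] l2 l3 u by auto
  ultimately have "card {l1, l2, l3} = 3" by simp
  moreover have "{l1, l2, l3} \<subseteq> Lf" using l1 l2 l3 by simp
  ultimately show ?thesis using card_mono[OF Lf_fin, of "{l1, l2, l3}"] by simp
qed

end


context tctx begin

lemma frac_dim_le:
  assumes "resolving_fun V E g"
  shows "frac_dim V E \<le> sum g V"
proof -
  have "bdd_below {sum g V | g. resolving_fun V E g}"
  proof (rule bdd_belowI[of _ 0])
    fix s assume "s \<in> {sum g V | g. resolving_fun V E g}"
    then obtain g' where "s = sum g' V" "resolving_fun V E g'" by auto
    then show "0 \<le> s" unfolding resolving_fun_def by (auto intro: sum_nonneg)
  qed
  then show ?thesis unfolding frac_dim_def using assms by (auto intro: cInf_lower)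
qed

lemma frac_dim1_ge:
  assumes "\<And>h. resolving_fun1 V E h \<Longrightarrow> c \<le> sum h V"
  shows "c \<le> frac_dim1 V E"
proof -
  have "resolving_fun1 V E (\<lambda>_. 1)"
    unfolding resolving_fun1_def
  proof (intro conjI ballI impI)
    fix x y assume x: "x \<in> V" and y: "y \<in> V" and ne: "x \<noteq> y"
    have "d y x \<noteq> 0" using d_zero[OF y x] ne by auto
    then have "x \<in> resolving_set1 E V x y" unfolding resolving_set1_def tdist1_def using x by auto
    moreover have "finite (resolving_set1 E V x y)" unfolding resolving_set1_def using finV by simp
    ultimately have "card (resolving_set1 E V x y) \<ge> 1"
      by (metis One_nat_def card_0_eq empty_iff less_one not_le)
    then show "1 \<le> sum (\<lambda>_. 1::real) (resolving_set1 E V x y)" by simp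
  qed auto
  then have ne: "{sum h V | h. resolving_fun1 V E h} \<noteq> {}" by blast
  show ?thesis unfolding frac_dim1_def using assms by (intro cInf_greatest[OF ne]) auto
qed

definition half_ind :: "'a set \<Rightarrow> 'a \<Rightarrow> real" where
  "half_ind L s = (if s \<in> L then 1/2 else 0)"

lemma half_ind_resolving:
  assumes L: "L \<subseteq> V"
    and two: "\<And>x y. x \<in> V \<Longrightarrow> y \<in> V \<Longrightarrow> x \<noteq> y \<Longrightarrow>
       \<exists>a b. a \<noteq> b \<and> a \<in> L \<and> b \<in> L \<and> d x a \<noteq> d y a \<and> d x b \<noteq> d y b"
  shows "resolving_fun V E (half_ind L)" "sum (half_ind L) V = card L / 2"
proof -
  show "resolving_fun V E (half_ind L)"
    unfolding resolving_fun_def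
  proof (intro conjI ballI impI)
    fix x y assume x: "x \<in> V" and y: "y \<in> V" and ne: "x \<noteq> y"
    obtain a b where ab: "a \<noteq> b" "a \<in> L" "b \<in> L" "d x a \<noteq> d y a" "d x b \<noteq> d y b"
      using two[OF x y ne] by blast
    have sub: "{a, b} \<subseteq> resolving_set E V x y" unfolding resolving_set_def using ab L by auto
    have fin: "finite (resolving_set E V x y)" unfolding resolving_set_def using finV by simp
    have "sum (half_ind L) {a, b} = 1" using ab unfolding half_ind_def by simp
    moreover have "sum (half_ind L) {a, b} \<le> sum (half_ind L) (resolving_set E V x y)"
      using sub fin by (intro sum_mono2) (auto simp: half_ind_def)
    ultimately show "1 \<le> sum (half_ind L) (resolving_set E V x y)" by simp
  qed (auto simp: half_ind_def)
  have "sum (half_ind L) V = sum (\<lambda>_. 1/2) L"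
    unfolding half_ind_def using L finV by (simp add: sum.If_cases Int_absorb1)
  then show "sum (half_ind L) V = card L / 2" by simp
qed

end

context tctx2 begin

lemma dim_upper1: "frac_dim V E \<le> card Lf / 2"
proof -
  have "Lf \<subseteq> V" unfolding Lf_def by auto
  moreover have "\<exists>a b. a \<noteq> b \<and> a \<in> Lf \<and> b \<in> Lf \<and> d x a \<noteq> d y a \<and> d x b \<noteq> d y b"
    if x: "x \<in> V" and y: "y \<in> V" and ne: "x \<noteq> y" for x y
  proof -
    have "d y x \<noteq> 0" "d x y \<noteq> 0" using d_zero[OF y x] d_zero[OF x y] ne by auto
    then obtain a where a: "a \<in> Lf" "d x a < d y a" using side_leaf[OF x y x] by auto
    obtain b where b: "b \<in> Lf" "d y b < d x b" using side_leaf[OF y x y] \<open>d x y \<noteq> 0\<close> by auto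
    have "a \<noteq> b" using a b by auto
    then show ?thesis using a b by (intro exI[of _ a] exI[of _ b]) auto
  qed
  ultimately show ?thesis using half_ind_resolving[of Lf] frac_dim_le by metis
qed

end


context tctx2 begin

lemma Lf_V: "l \<in> Lf \<Longrightarrow> l \<in> V" unfolding Lf_def by simp

lemma leaf_tdeg: "z \<in> V \<Longrightarrow> card (nb z) \<le> 1 \<Longrightarrow> z \<in> Lf"
  using nb_ne[of z] nb_fin[of z] unfolding Lf_def tdeg_nb by (simp add: le_Suc_eq card_eq_0_iff)

lemma caseA_upper:
  assumes noF1: "\<And>l p. l \<in> Lf \<Longrightarrow> E l p \<Longrightarrow> tdeg E p \<noteq> 2"
    and v: "is_major V E v" and vl: "{l \<in> Lf. E v l} = {l0}"
  shows "frac_dim V E \<le> (card Lf - 1) / 2"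
proof -
  have l0: "l0 \<in> Lf" "E v l0" using vl by auto
  have vV: "v \<in> V" and dv: "card (nb v) \<ge> 3" using v unfolding is_major_def tdeg_nb by auto
  have pl0: "par l0 = v" using par(2)[OF l0(1) Esym[OF l0(2)]] by simp
  have l0V: "l0 \<in> V" using Lf_V l0 by simp
  have lv: "l \<in> Lf \<Longrightarrow> E v l \<Longrightarrow> l = l0" for l using vl by auto
  have claim1: "\<exists>a \<in> Lf - {l0}. d x a < d y a"
    if x: "x \<in> V" and y: "y \<in> V" and z0: "z0 \<in> V" "d x z0 < d y z0" "z0 \<noteq> l0" for x y z0
  proof -
    obtain z where z: "z \<in> V" "d x z < d y z" "z \<notin> {l0}" "card (nb z - {l0}) \<le> 1"
      using side_max[OF x y z0(1,2), of "{l0}"] z0(3) by blast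
    have "\<not> E z l0"
    proof
      assume "E z l0"
      then have "z = v" using par(2)[OF l0(1) Esym] pl0 by blast
      then have "card (nb v - {l0}) \<le> 1" using z(4) by simp
      moreover have "card (nb v - {l0}) \<ge> 2" using dv nb_fin[of v] by (auto simp: card_Diff_singleton_if)
      ultimately show False by simp
    qed
    then have "nb z - {l0} = nb z" unfolding nb_def by auto
    then have "z \<in> Lf" using leaf_tdeg[OF z(1)] z(4) by simp
    then show ?thesis using z by blast
  qed
  have claim2: "\<exists>a b. a \<noteq> b \<and> a \<in> Lf - {l0} \<and> b \<in> Lf - {l0} \<and> d y a < d l0 a \<and> d y b < d l0 b"
    if y: "y \<in> V" and yl: "y \<noteq> l0" for y
  proof -
    have "d l0 y \<noteq> 0" using d_zero[OF l0V y] yl by auto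
    then obtain b1 where b1: "b1 \<in> Lf - {l0}" "d y b1 < d l0 b1"
      using claim1[OF y l0V y] yl by auto
    have b1V: "b1 \<in> V" using b1 Lf_V by auto
    obtain z0 where z0: "z0 \<in> V" "d y z0 < d l0 z0" "z0 \<notin> {l0, b1}"
    proof (cases "y = b1")
      case False
      then show ?thesis using that[of y] y yl \<open>d l0 y \<noteq> 0\<close> by auto
    next
      case True
      define p where "p = par y"
      have yL: "y \<in> Lf" using True b1 by simp
      have e: "E y p" unfolding p_def using par(1)[OF yL] .
      have pV: "p \<in> V" using e Ein by auto
      have pnl: "p \<notin> Lf" unfolding p_def using par_notleaf[OF yL] .
      have pv: "p \<noteq> v"
      proof
        assume "p = v"
        then have "y = l0" using lv[OF yL] Esym[OF e] by simp
        then show False using yl by simp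
      qed
      have "d p v \<noteq> 0" using d_zero[OF pV vV] pv by auto
      moreover have "d p l0 = d p v + 1"
      proof -
        have t: "tdeg E l0 = 1" using l0(1) unfolding Lf_def by simp
        have "p \<noteq> l0" using pnl l0(1) by auto
        then show ?thesis using leaf_dist[OF t Esym[OF l0(2)] pV] by simp
      qed
      moreover have "d y p = 1" using d_edge[OF e] .
      ultimately have "d y p < d l0 p" using d_sym[OF pV l0V] by simp
      moreover have "p \<notin> {l0, b1}" using pnl l0 True Eirr e by auto
      ultimately show ?thesis using that[of p] pV by blast
    qed
    obtain z where z: "z \<in> V" "d y z < d l0 z" "z \<notin> {l0, b1}" "card (nb z - {l0, b1}) \<le> 1"
      using side_max[OF y l0V z0(1,2) z0(3)] by blast
    have zL: "z \<in> Lf"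
    proof (cases "E z l0")
      case True
      then have zv: "z = v" using par(2)[OF l0(1) Esym[OF True]] pl0 by simp
      have "b1 \<in> nb v"
      proof (rule ccontr)
        assume "b1 \<notin> nb v"
        then have "nb v - {l0, b1} = nb v - {l0}" by auto
        moreover have "card (nb v - {l0}) \<ge> 2" using dv nb_fin[of v] by (auto simp: card_Diff_singleton_if)
        ultimately show False using z(4) zv by simp
      qed
      then have "b1 = l0" using lv b1 unfolding nb_def by auto
      then show ?thesis using b1 by simp
    next
      case False
      show ?thesis
      proof (cases "E z b1")
        case True
        have nbz: "nb z - {l0, b1} = nb z - {b1}" using False unfolding nb_def by auto
        have "card (nb z) \<le> 2"
        proof -
          have "card (nb z) \<le> card (nb z - {b1}) + 1" using nb_fin[of z]
            by (auto simp: card_Diff_singleton_if)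
          then show ?thesis using z(4) nbz by simp
        qed
        moreover have "tdeg E z \<noteq> 2" using noF1[of b1 z] b1 Esym[OF True] by auto
        ultimately have "card (nb z) \<le> 1" unfolding tdeg_nb by simp
        then show ?thesis using leaf_tdeg z(1) by simp
      next
        case False2: False
        then have "nb z - {l0, b1} = nb z" using False unfolding nb_def by auto
        then show ?thesis using leaf_tdeg z(1) z(4) by simp
      qed
    qed
    show ?thesis using b1 z zL by (intro exI[of _ b1] exI[of _ z]) auto
  qed
  have LV: "Lf - {l0} \<subseteq> V" using Lf_V by auto
  have two: "\<exists>a b. a \<noteq> b \<and> a \<in> Lf - {l0} \<and> b \<in> Lf - {l0} \<and> d x a \<noteq> d y a \<and> d x b \<noteq> d y b"
    if x: "x \<in> V" and y: "y \<in> V" and ne: "x \<noteq> y" for x y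
  proof (cases "x = l0")
    case True
    then show ?thesis using claim2[OF y] ne by fastforce
  next
    case False
    show ?thesis
    proof (cases "y = l0")
      case True
      then obtain a b where "a \<noteq> b \<and> a \<in> Lf - {l0} \<and> b \<in> Lf - {l0} \<and> d x a < d l0 a \<and> d x b < d l0 b"
        using claim2[OF x False] by blast
      then show ?thesis using True by (intro exI[of _ a] exI[of _ b]) auto
    next
      case False2: False
      have "d y x \<noteq> 0" "d x y \<noteq> 0" using d_zero[OF y x] d_zero[OF x y] ne by auto
      then obtain a where a: "a \<in> Lf - {l0}" "d x a < d y a" using claim1[OF x y x] False by auto
      obtain b where b: "b \<in> Lf - {l0}" "d y b < d x b" using claim1[OF y x y] False2 \<open>d x y \<noteq> 0\<close> by auto
      have "a \<noteq> b" using a b by auto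
      then show ?thesis using a b by (intro exI[of _ a] exI[of _ b]) auto
    qed
  qed
  have "card (Lf - {l0}) = card Lf - 1" using l0 Lf_fin by simp
  moreover have "card Lf \<ge> 1" using three_leaves by simp
  ultimately have "real (card (Lf - {l0})) = real (card Lf) - 1" by simp
  then show ?thesis using half_ind_resolving[OF LV two] frac_dim_le[of "half_ind (Lf - {l0})"] by simp
qed

end


locale tlow = tctx2 +
  fixes h :: "'a \<Rightarrow> real"
  assumes hres: "resolving_fun1 V E h"
begin

lemma hnn: "s \<in> V \<Longrightarrow> 0 \<le> h s" using hres unfolding resolving_fun1_def by auto

lemma sum_nn: "A \<subseteq> V \<Longrightarrow> 0 \<le> sum h A"
  using hnn by (meson subsetD sum_nonneg)

lemma constr:
  assumes "x \<in> V" "y \<in> V" "x \<noteq> y" "resolving_set1 E V x y \<subseteq> Y" "Y \<subseteq> V"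
  shows "1 \<le> sum h Y"
proof -
  have "1 \<le> sum h (resolving_set1 E V x y)" using hres assms(1-3) unfolding resolving_fun1_def by blast
  also have "\<dots> \<le> sum h Y"
    using assms(4,5) finV hnn by (intro sum_mono2) (auto intro: finite_subset)
  finally show ?thesis .
qed

lemma R1_sub:
  assumes "x \<in> V" "y \<in> V"
  shows "resolving_set1 E V x y \<subseteq> insert x (nb x) \<union> insert y (nb y)"
proof
  fix z assume z: "z \<in> resolving_set1 E V x y"
  then have zV: "z \<in> V" and ne: "min (d x z) 2 \<noteq> min (d y z) 2"
    unfolding resolving_set1_def tdist1_def by auto
  then have "d x z \<le> 1 \<or> d y z \<le> 1" by linarith
  then show "z \<in> insert x (nb x) \<union> insert y (nb y)"
    using d_le1[OF assms(1) zV] d_le1[OF assms(2) zV] unfolding nb_def by auto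
qed

lemma sum_insert_le: "finite A \<Longrightarrow> a \<in> V \<Longrightarrow> sum h (insert a A) \<le> h a + sum h A"
  using hnn by (simp add: sum.insert_if)

lemma sum_Un_le: "finite A \<Longrightarrow> finite B \<Longrightarrow> A \<subseteq> V \<Longrightarrow> B \<subseteq> V \<Longrightarrow> sum h (A \<union> B) \<le> sum h A + sum h B"
proof -
  assume a: "finite A" "finite B" "A \<subseteq> V" "B \<subseteq> V"
  have "sum h (A \<union> B) = sum h A + sum h B - sum h (A \<inter> B)" using sum_Un[OF a(1,2)] by simp
  moreover have "0 \<le> sum h (A \<inter> B)" using sum_nn[of "A \<inter> B"] a by auto
  ultimately show ?thesis by simp
qed

definition P where "P = {p \<in> V. p \<notin> Lf \<and> (\<exists>l\<in>Lf. E p l)}"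
definition Lp where "Lp p = {l \<in> Lf. E p l}"
definition W where "W = V - Lf - P"
definition e where "e p = h p + sum h (Lp p) - real (card (Lp p)) / 2"

lemma P_V: "P \<subseteq> V" unfolding P_def by auto
lemma P_fin: "finite P" using P_V finV finite_subset by blast
lemma W_V: "W \<subseteq> V" unfolding W_def by auto
lemma Lp_sub: "Lp p \<subseteq> Lf" unfolding Lp_def by auto
lemma Lp_fin: "finite (Lp p)" using Lp_sub Lf_fin finite_subset by blast
lemma Lp_ne: "p \<in> P \<Longrightarrow> Lp p \<noteq> {}" unfolding P_def Lp_def by auto
lemma Lf_sub: "Lf \<subseteq> V" unfolding Lf_def by auto
lemma Lp_par: "l \<in> Lp p \<Longrightarrow> p = par l"
  unfolding Lp_def using par(2) Esym by blast
lemma par_P: "l \<in> Lf \<Longrightarrow> par l \<in> P"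
  unfolding P_def using par(1) par_notleaf Esym Ein by blast
lemma Lp_disj: "p \<noteq> q \<Longrightarrow> Lp p \<inter> Lp q = {}" using Lp_par by blast
lemma Lf_UN: "Lf = (\<Union>p\<in>P. Lp p)"
proof
  show "Lf \<subseteq> (\<Union>p\<in>P. Lp p)"
  proof
    fix l assume l: "l \<in> Lf"
    then have "l \<in> Lp (par l)" unfolding Lp_def using par(1) Esym by blast
    then show "l \<in> (\<Union>p\<in>P. Lp p)" using par_P[OF l] by blast
  qed
  show "(\<Union>p\<in>P. Lp p) \<subseteq> Lf" using Lp_sub by blast
qed

lemma decomp: "sum h V - real (card Lf) / 2 = sum e P + sum h W"
proof -
  have V: "V = Lf \<union> P \<union> W" unfolding W_def using Lf_sub P_V by auto
  have d1: "Lf \<inter> P = {}" unfolding P_def by auto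
  have d2: "(Lf \<union> P) \<inter> W = {}" unfolding W_def by auto
  have fL: "finite Lf" using Lf_fin .
  have fW: "finite W" using W_V finV finite_subset by blast
  have "sum h (Lf \<union> P \<union> W) = sum h (Lf \<union> P) + sum h W"
    using d2 fL P_fin fW by (intro sum.union_disjoint) auto
  moreover have "sum h (Lf \<union> P) = sum h Lf + sum h P"
    using d1 fL P_fin by (intro sum.union_disjoint) auto
  ultimately have "sum h V = sum h Lf + sum h P + sum h W" using V by simp
  moreover have "sum h Lf = (\<Sum>p\<in>P. sum h (Lp p))"
    unfolding Lf_UN using P_fin Lp_fin Lp_disj by (intro sum.UNION_disjoint) auto
  moreover have "card Lf = (\<Sum>p\<in>P. card (Lp p))"
    unfolding Lf_UN using P_fin Lp_fin Lp_disj by (intro card_UN_disjoint) auto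
  moreover have "sum e P = sum h P + (\<Sum>p\<in>P. sum h (Lp p)) - (\<Sum>p\<in>P. real (card (Lp p))) / 2"
    unfolding e_def by (simp add: sum.distrib sum_subtractf sum_divide_distrib)
  ultimately show ?thesis by (simp add: of_nat_sum)
qed

definition mleaf where "mleaf p = (SOME l. l \<in> Lp p \<and> (\<forall>l'\<in>Lp p. h l \<le> h l'))"
definition m where "m p = h p + h (mleaf p)"

lemma mleaf: assumes "p \<in> P" shows "mleaf p \<in> Lp p" "\<And>l'. l' \<in> Lp p \<Longrightarrow> h (mleaf p) \<le> h l'"
proof -
  have "\<exists>l. l \<in> Lp p \<and> (\<forall>l'\<in>Lp p. h l \<le> h l')"
  proof -
    define mm where "mm = Min (h ` Lp p)"
    have "mm \<in> h ` Lp p" unfolding mm_def using Lp_fin Lp_ne[OF assms] by (intro Min_in) auto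
    then obtain l where l: "l \<in> Lp p" "h l = mm" by auto
    have "\<forall>l'\<in>Lp p. h l \<le> h l'" using l Lp_fin unfolding mm_def by auto
    then show ?thesis using l by blast
  qed
  then have "mleaf p \<in> Lp p \<and> (\<forall>l'\<in>Lp p. h (mleaf p) \<le> h l')"
    unfolding mleaf_def by (rule someI_ex)
  then show "mleaf p \<in> Lp p" "\<And>l'. l' \<in> Lp p \<Longrightarrow> h (mleaf p) \<le> h l'" by auto
qed

lemma Lp_leaf: "l \<in> Lp p \<Longrightarrow> l \<in> Lf \<and> E p l \<and> E l p \<and> l \<in> V \<and> p \<in> V"
  unfolding Lp_def using Esym Ein by blast

lemma nb_leaf: "l \<in> Lp p \<Longrightarrow> nb l = {p}"
  using Lp_leaf leaf_nb unfolding Lf_def by blast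

lemma twin:
  assumes l: "l \<in> Lp p" and l': "l' \<in> Lp p" and ne: "l \<noteq> l'"
  shows "1 \<le> h l + h l'"
proof -
  have L: "l \<in> Lf" "E l p" "l \<in> V" "p \<in> V" using Lp_leaf[OF l] by auto
  have L': "l' \<in> Lf" "E l' p" "l' \<in> V" using Lp_leaf[OF l'] by auto
  have t: "tdeg E l = 1" "tdeg E l' = 1" using L L' unfolding Lf_def by auto
  have "resolving_set1 E V l l' \<subseteq> {l, l'}"
  proof
    fix z assume z: "z \<in> resolving_set1 E V l l'"
    then have zV: "z \<in> V" and ne2: "tdist1 E l z \<noteq> tdist1 E l' z" unfolding resolving_set1_def by auto
    show "z \<in> {l, l'}"
    proof (rule ccontr)
      assume "z \<notin> {l, l'}"
      then have "d z l = d z p + 1" "d z l' = d z p + 1"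
        using leaf_dist[OF t(1) L(2) zV] leaf_dist[OF t(2) L'(2) zV] by auto
      then have "d l z = d l' z" using d_sym[OF L(3) zV] d_sym[OF L'(3) zV] by simp
      then show False using ne2 unfolding tdist1_def by simp
    qed
  qed
  then have "1 \<le> sum h {l, l'}" using constr[OF L(3) L'(3) ne] L(3) L'(3) by auto
  then show ?thesis using ne by simp
qed

lemma half: assumes p: "p \<in> P" and l: "l \<in> Lp p" "l \<noteq> mleaf p" shows "1/2 \<le> h l"
  using twin[OF mleaf(1)[OF p] l(1)] l(2) mleaf(2)[OF p l(1)] by simp

lemma E1: assumes p: "p \<in> P" shows "m p - 1/2 \<le> e p"
proof -
  define l0 where "l0 = mleaf p"
  have l0: "l0 \<in> Lp p" using mleaf(1)[OF p] l0_def by simp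
  have "sum h (Lp p) = h l0 + sum h (Lp p - {l0})" using l0 Lp_fin by (simp add: sum.remove)
  moreover have "sum h (Lp p - {l0}) \<ge> sum (\<lambda>_. 1/2) (Lp p - {l0})"
    using half[OF p] l0_def by (intro sum_mono) auto
  moreover have "card (Lp p - {l0}) = card (Lp p) - 1" using l0 Lp_fin by simp
  moreover have "card (Lp p) \<ge> 1" using l0 Lp_fin[of p] by (simp add: Suc_le_eq card_gt_0_iff) blast
  ultimately show ?thesis unfolding e_def m_def l0_def[symmetric] by (simp add: of_nat_diff)
qed

lemma E2: assumes p: "p \<in> P" and c: "card (Lp p) \<ge> 2" shows "h p \<le> e p"
proof -
  define l0 where "l0 = mleaf p"
  have l0: "l0 \<in> Lp p" using mleaf(1)[OF p] l0_def by simp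
  have "Lp p - {l0} \<noteq> {}"
  proof
    assume "Lp p - {l0} = {}"
    then have "Lp p \<subseteq> {l0}" by blast
    then have "card (Lp p) \<le> card {l0}" by (intro card_mono) auto
    then show False using c by simp
  qed
  then obtain l1 where l1: "l1 \<in> Lp p" "l1 \<noteq> l0" by blast
  have "sum h (Lp p) = h l0 + sum h (Lp p - {l0})" using l0 Lp_fin by (simp add: sum.remove)
  moreover have "sum h (Lp p - {l0}) = h l1 + sum h (Lp p - {l0} - {l1})"
    using l1 Lp_fin by (simp add: sum.remove)
  moreover have "sum h (Lp p - {l0} - {l1}) \<ge> sum (\<lambda>_. 1/2) (Lp p - {l0} - {l1})"
    using half[OF p] l0_def by (intro sum_mono) auto
  moreover have "card (Lp p - {l0} - {l1}) = card (Lp p) - 2" using l0 l1 Lp_fin by (simp add: card_Diff_subset)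
  moreover have "1 \<le> h l0 + h l1" using twin[OF l0 l1(1)] l1(2) by simp
  ultimately show ?thesis unfolding e_def using c by (simp add: of_nat_diff)
qed

lemma E3: assumes p: "p \<in> P" and q: "q \<in> P" and ne: "p \<noteq> q" shows "1 \<le> m p + m q"
proof -
  have lp: "mleaf p \<in> Lp p" and lq: "mleaf q \<in> Lp q" using mleaf p q by auto
  have Lp': "mleaf p \<in> V" "p \<in> V" and Lq': "mleaf q \<in> V" "q \<in> V" using Lp_leaf lp lq by auto
  have nl: "mleaf p \<noteq> mleaf q" using Lp_par[OF lp] Lp_par[OF lq] ne by auto
  have "resolving_set1 E V (mleaf p) (mleaf q) \<subseteq> {mleaf p, p} \<union> {mleaf q, q}"
    using R1_sub[OF Lp'(1) Lq'(1)] nb_leaf[OF lp] nb_leaf[OF lq] by simp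
  then have "1 \<le> sum h ({mleaf p, p} \<union> {mleaf q, q})"
    using constr[OF Lp'(1) Lq'(1) nl] Lp' Lq' by auto
  also have "\<dots> \<le> sum h {mleaf p, p} + sum h {mleaf q, q}" using Lp' Lq' by (intro sum_Un_le) auto
  also have "\<dots> \<le> m p + m q" unfolding m_def using sum_insert_le[of "{p}" "mleaf p"] sum_insert_le[of "{q}" "mleaf q"] Lp' Lq' by simp
  finally show ?thesis .
qed

lemma Esum_min:
  assumes Q: "Q \<subseteq> P" and ps: "ps \<in> Q" and mn: "\<And>p. p \<in> Q \<Longrightarrow> m ps \<le> m p"
  shows "e ps \<le> sum e Q" "\<And>p'. p' \<in> Q \<Longrightarrow> p' \<noteq> ps \<Longrightarrow> e ps + e p' \<le> sum e Q"
proof -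
  have fQ: "finite Q" using Q P_fin finite_subset by blast
  have nn: "0 \<le> e p" if "p \<in> Q - {ps}" for p
  proof -
    have "1 \<le> m ps + m p" using E3[of ps p] Q ps that by auto
    moreover have "m ps \<le> m p" using mn that by simp
    ultimately show ?thesis using E1[of p] Q that by auto
  qed
  have s: "sum e Q = e ps + sum e (Q - {ps})" using fQ ps by (simp add: sum.remove)
  have "0 \<le> sum e (Q - {ps})" using nn by (intro sum_nonneg) auto
  then show "e ps \<le> sum e Q" using s by simp
  show "e ps + e p' \<le> sum e Q" if "p' \<in> Q" "p' \<noteq> ps" for p'
  proof -
    have "sum e (Q - {ps}) = e p' + sum e (Q - {ps} - {p'})" using fQ that by (simp add: sum.remove)
    moreover have "0 \<le> sum e (Q - {ps} - {p'})" using nn by (intro sum_nonneg) auto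
    ultimately show ?thesis using s by simp
  qed
qed

lemma argmin_m: assumes "Q \<subseteq> P" "Q \<noteq> {}" obtains ps where "ps \<in> Q" "\<And>p. p \<in> Q \<Longrightarrow> m ps \<le> m p"
proof -
  have fQ: "finite Q" using assms P_fin finite_subset by blast
  define mm where "mm = Min (m ` Q)"
  have "mm \<in> m ` Q" unfolding mm_def using fQ assms by (intro Min_in) auto
  then obtain ps where "ps \<in> Q" "m ps = mm" by auto
  moreover have "\<And>p. p \<in> Q \<Longrightarrow> mm \<le> m p" unfolding mm_def using fQ by auto
  ultimately show ?thesis using that by auto
qed

lemma Esum2: assumes Q: "Q \<subseteq> P" and c: "card Q \<ge> 2" shows "0 \<le> sum e Q"
proof -
  have "Q \<noteq> {}" using c by auto
  then obtain ps where ps: "ps \<in> Q" "\<And>p. p \<in> Q \<Longrightarrow> m ps \<le> m p" using argmin_m[OF Q] by blast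
  have "Q - {ps} \<noteq> {}"
  proof
    assume "Q - {ps} = {}"
    then have "Q \<subseteq> {ps}" by blast
    then have "card Q \<le> card {ps}" by (intro card_mono) auto
    then show False using c by simp
  qed
  then obtain p' where p': "p' \<in> Q" "p' \<noteq> ps" by blast
  have "e ps + e p' \<le> sum e Q" using Esum_min(2)[OF Q ps p'] .
  moreover have "m ps - 1/2 \<le> e ps" "m p' - 1/2 \<le> e p'" using E1 Q ps(1) p'(1) by auto
  moreover have "1 \<le> m ps + m p'" using E3 Q ps(1) p' by auto
  ultimately show ?thesis by simp
qed

end


context tlow begin

lemma S_def: "sum h V = real (card Lf) / 2 + (sum e P + sum h W)" using decomp by simp

lemma LB_A: assumes "card P \<ge> 2" shows "real (card Lf) / 2 \<le> sum h V"
  using S_def Esum2[OF _ assms] sum_nn[OF W_V] by simp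

lemma LB_C:
  assumes all2: "\<And>p. p \<in> P \<Longrightarrow> card (Lp p) \<ge> 2" and w: "w \<in> W"
  shows "real (card Lf) / 2 + 1/4 \<le> sum h V"
proof -
  obtain l where l: "l \<in> Lf" using three_leaves by fastforce
  define p0 where "p0 = par l"
  have p0: "p0 \<in> P" unfolding p0_def using par_P[OF l] .
  define ls where "ls = mleaf p0"
  have ls: "ls \<in> Lp p0" unfolding ls_def using mleaf(1)[OF p0] .
  have lsV: "ls \<in> V" "p0 \<in> V" and lsL: "ls \<in> Lf" using Lp_leaf[OF ls] by auto
  have wV: "w \<in> V" and wL: "w \<notin> Lf" and wP: "w \<notin> P" using w unfolding W_def by auto
  have ne: "ls \<noteq> w" using lsL wL by auto
  have NW: "insert w (nb w) \<subseteq> W \<union> P"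
  proof
    fix u assume u: "u \<in> insert w (nb w)"
    show "u \<in> W \<union> P"
    proof (cases "u = w")
      case True then show ?thesis using w by simp
    next
      case False
      then have e: "E w u" using u unfolding nb_def by simp
      then have uV: "u \<in> V" using Ein by auto
      have "u \<notin> Lf"
      proof
        assume "u \<in> Lf"
        then have "w \<in> P" unfolding P_def using wV wL e by blast
        then show False using wP by simp
      qed
      then show ?thesis unfolding W_def using uV by auto
    qed
  qed
  have fW: "finite W" using W_V finV finite_subset by blast
  have fN: "finite (insert w (nb w))" using nb_fin by simp
  have NV: "insert w (nb w) \<subseteq> V" using wV nb_sub by auto
  have "resolving_set1 E V ls w \<subseteq> {ls, p0} \<union> insert w (nb w)"
    using R1_sub[OF lsV(1) wV] nb_leaf[OF ls] by auto
  then have "1 \<le> sum h ({ls, p0} \<union> insert w (nb w))"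
    using constr[OF lsV(1) wV ne] lsV NV by auto
  also have "\<dots> \<le> sum h {ls, p0} + sum h (insert w (nb w))"
    using lsV NV fN by (intro sum_Un_le) auto
  also have "sum h {ls, p0} \<le> m p0" unfolding m_def ls_def[symmetric]
    using sum_insert_le[of "{p0}" ls] lsV by simp
  also have "sum h (insert w (nb w)) \<le> sum h (W \<union> P)"
    using NW fW P_fin hnn W_V P_V by (intro sum_mono2) auto
  also have "sum h (W \<union> P) = sum h W + sum h P"
    using fW P_fin by (intro sum.union_disjoint) (auto simp: W_def)
  also have "sum h P \<le> sum e P" using E2 all2 by (intro sum_mono) auto
  finally have A: "1 - m p0 \<le> sum e P + sum h W" by simp
  have "sum e P = e p0 + sum e (P - {p0})" using P_fin p0 by (simp add: sum.remove)
  moreover have "0 \<le> sum e (P - {p0})"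
    using E2 all2 hnn P_V by (intro sum_nonneg) (meson Diff_subset order_trans subsetD)
  moreover have "m p0 - 1/2 \<le> e p0" using E1[OF p0] .
  moreover have "0 \<le> sum h W" using sum_nn[OF W_V] .
  ultimately have B: "m p0 - 1/2 \<le> sum e P + sum h W" by simp
  from A B have "1/4 \<le> sum e P + sum h W" by simp
  then show ?thesis using S_def by simp
qed

end


context tlow begin

lemma Lp_single: "p \<in> P \<Longrightarrow> \<not> card (Lp p) \<ge> 2 \<Longrightarrow> \<exists>l. Lp p = {l}"
proof -
  assume p: "p \<in> P" and c: "\<not> card (Lp p) \<ge> 2"
  have "card (Lp p) \<noteq> 0" using Lp_ne[OF p] Lp_fin by simp
  then have "card (Lp p) = 1" using c by simp
  then show ?thesis by (simp add: card_1_singleton_iff)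
qed

lemma single_e: "p \<in> P \<Longrightarrow> Lp p = {l} \<Longrightarrow> mleaf p = l \<and> m p = h p + h l \<and> e p = m p - 1/2"
  using mleaf(1)[of p] unfolding m_def e_def by auto

lemma LB_B:
  assumes l1: "l1 \<in> Lf" and e1: "E l1 p1" and d2: "tdeg E p1 = 2"
  shows "real (card Lf) / 2 + 1/6 \<le> sum h V"
proof -
  have l1V: "l1 \<in> V" and p1V: "p1 \<in> V" using e1 Ein by auto
  have t1: "tdeg E l1 = 1" using l1 unfolding Lf_def by simp
  have nbl1: "nb l1 = {p1}" using leaf_nb[OF t1 e1] .
  have "l1 \<in> nb p1" using Esym[OF e1] unfolding nb_def by simp
  moreover have "card (nb p1) = 2" using d2 unfolding tdeg_nb by simp
  ultimately obtain q where nbp1: "nb p1 = {l1, q}" and ql1: "q \<noteq> l1"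
  proof -
    assume l1n: "l1 \<in> nb p1" and c: "card (nb p1) = 2"
    obtain x y where xy: "nb p1 = {x, y}" "x \<noteq> y" using c by (auto simp: card_2_iff)
    show ?thesis
    proof (cases "l1 = x")
      case True then show ?thesis using that[of y] xy by simp
    next
      case False
      then have "l1 = y" using l1n xy by simp
      then show ?thesis using that[of x] xy by (simp add: insert_commute)
    qed
  qed
  have e1q: "E p1 q" using nbp1 unfolding nb_def by auto
  have qV: "q \<in> V" using e1q Ein by auto
  have p1q: "p1 \<noteq> q" using e1q Eirr by auto
  have p1L: "p1 \<notin> Lf" using d2 unfolding Lf_def by auto
  have qL: "q \<notin> Lf"
  proof
    assume qL: "q \<in> Lf"
    have nbq: "nb q = {p1}" using leaf_nb[of q p1] qL Esym[OF e1q] unfolding Lf_def by simp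
    show False
    proof (rule no_major_small[of l1 "{l1, p1, q}"])
      show "l1 \<in> {l1, p1, q}" "l1 \<in> V" using l1V by auto
      show "b \<in> {l1, p1, q}" if "a \<in> {l1, p1, q}" "E a b" for a b
        using that nbl1 nbp1 nbq unfolding nb_def by (auto simp: set_eq_iff)
      show "tdeg E a \<le> 2" if "a \<in> {l1, p1, q}" for a
        using that t1 d2 qL unfolding Lf_def by auto
    qed
  qed
  have p1P: "p1 \<in> P" unfolding P_def using p1V p1L l1 Esym[OF e1] by blast
  have Lp1: "Lp p1 = {l1}"
  proof -
    have "Lp p1 \<subseteq> {l1}" unfolding Lp_def using nbp1 qL unfolding nb_def by (auto simp: set_eq_iff)
    moreover have "l1 \<in> Lp p1" unfolding Lp_def using l1 Esym[OF e1] by simp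
    ultimately show ?thesis by blast
  qed
  have mp1: "m p1 = h p1 + h l1" and ep1: "e p1 = m p1 - 1/2" using single_e[OF p1P Lp1] by auto
  have C1: "1 \<le> m p1 + h q"
  proof -
    have ne: "l1 \<noteq> p1" using e1 Eirr by auto
    have "resolving_set1 E V l1 p1 \<subseteq> {l1, p1, q}"
      using R1_sub[OF l1V p1V] nbl1 nbp1 by auto
    then have "1 \<le> sum h {l1, p1, q}" using constr[OF l1V p1V ne] l1V p1V qV by auto
    also have "\<dots> \<le> h l1 + h p1 + h q"
      using sum_insert_le[of "{p1, q}" l1] sum_insert_le[of "{q}" p1] l1V p1V qV by simp
    finally show ?thesis using mp1 by simp
  qed
  have S: "sum h V = real (card Lf) / 2 + (sum e P + sum h W)" using S_def .
  have hW: "0 \<le> sum h W" using sum_nn[OF W_V] .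
  have fP: "finite P" using P_fin .
  show ?thesis
  proof (cases "q \<in> P")
    case False
    then have qW: "q \<in> W" unfolding W_def using qV qL by simp
    have "h q \<le> sum h W"
    proof -
      have fW: "finite W" using W_V finV finite_subset by blast
      have "sum h {q} \<le> sum h W" using qW fW hnn W_V by (intro sum_mono2) auto
      then show ?thesis by simp
    qed
    define Q where "Q = P - {p1}"
    have QP: "Q \<subseteq> P" unfolding Q_def by auto
    have sP: "sum e P = e p1 + sum e Q" unfolding Q_def using fP p1P by (simp add: sum.remove)
    have leafQ: "par l \<in> Q" if l: "l \<in> Lf" "l \<noteq> l1" for l
    proof -
      have "par l \<noteq> p1"
      proof
        assume "par l = p1"
        then have "l \<in> Lp p1" unfolding Lp_def using l(1) Esym[OF par(1)[OF l(1)]] by simp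
        then show False using Lp1 l by simp
      qed
      then show ?thesis unfolding Q_def using par_P[OF l(1)] by simp
    qed
    have c2: "card (Lf - {l1}) \<ge> 2" using three_leaves l1 Lf_fin by (simp add: card_Diff_singleton)
    have eQ: "0 \<le> sum e Q"
    proof (cases "card Q \<ge> 2")
      case True then show ?thesis using Esum2[OF QP] by simp
    next
      case False
      have fQ: "finite Q" using QP fP finite_subset by blast
      have "Lf - {l1} \<noteq> {}" using c2 by (intro notI) simp
      then obtain a where a: "a \<in> Lf - {l1}" by blast
      have "Q \<noteq> {}" using leafQ a by blast
      then have "card Q \<noteq> 0" using fQ by simp
      then have "card Q = 1" using False by simp
      then obtain ps where Qs: "Q = {ps}" by (auto simp: card_1_singleton_iff)
      have "Lf - {l1} \<subseteq> Lp ps"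
      proof
        fix l assume l: "l \<in> Lf - {l1}"
        then have "par l = ps" using leafQ Qs by auto
        then show "l \<in> Lp ps" unfolding Lp_def using l par(1) Esym by blast
      qed
      then have "card (Lf - {l1}) \<le> card (Lp ps)" using Lp_fin by (intro card_mono) auto
      then have "card (Lp ps) \<ge> 2" using c2 by simp
      then have "h ps \<le> e ps" using E2 Qs QP by auto
      moreover have "0 \<le> h ps" using hnn P_V Qs QP by auto
      ultimately show ?thesis using Qs by simp
    qed
    have "1/2 \<le> sum e P + sum h W" using sP eQ ep1 C1 \<open>h q \<le> sum h W\<close> by simp
    then show ?thesis using S by simp
  next
    case qP: True
    define Q where "Q = P - {p1, q}"
    have QP: "Q \<subseteq> P" unfolding Q_def by auto
    have fQ: "finite Q" using QP fP finite_subset by blast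
    have sP: "sum e P = e p1 + e q + sum e Q"
    proof -
      have "sum e P = e p1 + sum e (P - {p1})" using fP p1P by (simp add: sum.remove)
      moreover have "sum e (P - {p1}) = e q + sum e (P - {p1} - {q})"
        using fP qP p1q by (intro sum.remove) auto
      moreover have "P - {p1} - {q} = Q" unfolding Q_def by auto
      ultimately show ?thesis by simp
    qed
    have mq1: "1 \<le> m p1 + m ps" "1 \<le> m q + m ps" if "ps \<in> Q" for ps
      using E3[OF p1P, of ps] E3[OF qP, of ps] that unfolding Q_def by auto
    show ?thesis
    proof (cases "card (Lp q) \<ge> 2")
      case True
      have eq1: "h q \<le> e q" using E2[OF qP True] .
      have eq2: "m q - 1/2 \<le> e q" using E1[OF qP] .
      have "1/4 \<le> sum e P + sum h W"
      proof (cases "Q = {}")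
        case True
        then show ?thesis using sP ep1 C1 eq1 hW by simp
      next
        case False
        obtain ps where ps: "ps \<in> Q" "\<And>p. p \<in> Q \<Longrightarrow> m ps \<le> m p" using argmin_m[OF QP False] by blast
        have "e ps \<le> sum e Q" using Esum_min(1)[OF QP ps] .
        moreover have "m ps - 1/2 \<le> e ps" using E1 QP ps(1) by auto
        ultimately show ?thesis using sP ep1 C1 eq1 eq2 mq1[OF ps(1)] hW by linarith
      qed
      then show ?thesis using S by simp
    next
      case False
      obtain lq where Lq: "Lp q = {lq}" using Lp_single[OF qP False] by blast
      have mq: "m q = h q + h lq" and eq: "e q = m q - 1/2" using single_e[OF qP Lq] by auto
      have lqL: "lq \<in> Lp q" using Lq by simp
      have lqV: "lq \<in> V" and eqlq: "E q lq" and lqLf: "lq \<in> Lf" using Lp_leaf[OF lqL] by auto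
      have nblq: "nb lq = {q}" using nb_leaf[OF lqL] .
      have hq: "0 \<le> h q" "0 \<le> h lq" using hnn qV lqV by auto
      have C2: "1 \<le> m p1 + h lq"
      proof -
        have ne: "lq \<noteq> p1" using lqLf p1L by auto
        have "resolving_set1 E V lq p1 \<subseteq> {lq, p1, l1}"
        proof
          fix z assume z: "z \<in> resolving_set1 E V lq p1"
          have "z \<in> insert lq (nb lq) \<union> insert p1 (nb p1)" using R1_sub[OF lqV p1V] z by auto
          moreover have "z \<noteq> q"
          proof
            assume "z = q"
            then have "tdist1 E lq z = tdist1 E p1 z"
              unfolding tdist1_def using d_edge[OF Esym[OF eqlq]] d_edge[OF e1q] by simp
            then show False using z unfolding resolving_set1_def by simp
          qed
          ultimately show "z \<in> {lq, p1, l1}" using nblq nbp1 by auto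
        qed
        then have "1 \<le> sum h {lq, p1, l1}" using constr[OF lqV p1V ne] lqV p1V l1V by auto
        also have "\<dots> \<le> h lq + h p1 + h l1"
          using sum_insert_le[of "{p1, l1}" lq] sum_insert_le[of "{l1}" p1] lqV p1V l1V by simp
        finally show ?thesis using mp1 by simp
      qed
      have "tdeg E q \<ge> 3"
      proof (rule ccontr)
        assume "\<not> tdeg E q \<ge> 3"
        then have cq: "card (nb q) \<le> 2" unfolding tdeg_nb by simp
        have sub: "{p1, lq} \<subseteq> nb q" using Esym[OF e1q] eqlq unfolding nb_def by auto
        have "p1 \<noteq> lq" using lqLf p1L by auto
        then have "card {p1, lq} = 2" by simp
        then have nbq: "nb q = {p1, lq}" using card_seteq[OF nb_fin sub] cq by simp
        show False
        proof (rule no_major_small[of l1 "{l1, p1, q, lq}"])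
          show "l1 \<in> {l1, p1, q, lq}" "l1 \<in> V" using l1V by auto
          show "b \<in> {l1, p1, q, lq}" if "a \<in> {l1, p1, q, lq}" "E a b" for a b
            using that nbl1 nbp1 nbq nblq unfolding nb_def by (auto simp: set_eq_iff)
          show "tdeg E a \<le> 2" if "a \<in> {l1, p1, q, lq}" for a
            using that t1 d2 lqLf nbq \<open>card {p1, lq} = 2\<close> unfolding Lf_def tdeg_nb by auto
        qed
      qed
      moreover have sub: "{p1, lq} \<subseteq> nb q" using Esym[OF e1q] eqlq unfolding nb_def by auto
      moreover have "card {p1, lq} = 2"
      proof -
        have "p1 \<noteq> lq" using lqLf p1L by blast
        then show ?thesis by simp
      qed
      ultimately have "card (nb q - {p1, lq}) \<ge> 1" using card_Diff_subset[OF _ sub] unfolding tdeg_nb by simp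
      then have "nb q - {p1, lq} \<noteq> {}" by (intro notI) simp
      then obtain u where u: "u \<in> nb q" "u \<noteq> p1" "u \<noteq> lq" by blast
      have equ: "E q u" using u unfolding nb_def by simp
      have uV: "u \<in> V" using equ Ein by auto
      have "d u u < d q u" using d_edge[OF equ] by simp
      then obtain z where z: "z \<in> Lf" "d u z < d q z" using side_leaf[OF uV qV uV] by blast
      have zV: "z \<in> V" using z Lf_V by simp
      have "par z \<in> Q"
      proof -
        have "par z \<noteq> q"
        proof
          assume "par z = q"
          then have "z \<in> Lp q" unfolding Lp_def using z(1) Esym[OF par(1)[OF z(1)]] by simp
          then have "z = lq" using Lq by simp
          then have "d q z = 1" using d_edge[OF eqlq] by simp
          then have "d u z = 0" using z by simp
          then have "u = z" using d_zero[OF uV zV] by simp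
          then show False using u \<open>z = lq\<close> by simp
        qed
        moreover have "par z \<noteq> p1"
        proof
          assume "par z = p1"
          then have "z \<in> Lp p1" unfolding Lp_def using z(1) Esym[OF par(1)[OF z(1)]] by simp
          then have zl1: "z = l1" using Lp1 by simp
          have "q \<noteq> l1" using ql1 .
          then have "d q l1 = d q p1 + 1" using leaf_dist[OF t1 e1 qV] by simp
          then have "d q l1 = 2" using d_edge[OF Esym[OF e1q]] by simp
          then have "d u l1 \<le> 1" using z zl1 by simp
          then have "u = l1 \<or> E u l1" using d_le1[OF uV l1V] by simp
          moreover have "u \<noteq> l1"
          proof
            assume "u = l1"
            then have "q \<in> nb l1" using Esym[OF equ] unfolding nb_def by simp
            then show False using nbl1 p1q by simp
          qed
          moreover have "\<not> E u l1"
          proof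
            assume "E u l1"
            then have "u \<in> nb l1" using Esym unfolding nb_def by blast
            then show False using nbl1 u by simp
          qed
          ultimately show False by simp
        qed
        ultimately show ?thesis unfolding Q_def using par_P[OF z(1)] by simp
      qed
      then have QN: "Q \<noteq> {}" by blast
      obtain ps where ps: "ps \<in> Q" "\<And>p. p \<in> Q \<Longrightarrow> m ps \<le> m p" using argmin_m[OF QP QN] by blast
      have "e ps \<le> sum e Q" using Esum_min(1)[OF QP ps] .
      moreover have "m ps - 1/2 \<le> e ps" using E1 QP ps(1) by auto
      ultimately have "1/6 \<le> sum e P + sum h W"
        using sP ep1 eq mq C1 C2 mq1[OF ps(1)] hW hq by linarith
      then show ?thesis using S by simp
    qed
  qed
qed

end


context tctx2 begin

lemma lb_B:
  assumes "l1 \<in> Lf" "E l1 p1" "tdeg E p1 = 2"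
  shows "real (card Lf) / 2 + 1/6 \<le> frac_dim1 V E"
proof (rule frac_dim1_ge)
  fix h assume hr: "resolving_fun1 V E h"
  interpret L: tlow V E h by unfold_locales (rule hr)
  show "real (card Lf) / 2 + 1/6 \<le> sum h V" using L.LB_B[OF assms] .
qed

lemma lb_C:
  assumes noF1: "\<And>l p. l \<in> Lf \<Longrightarrow> E l p \<Longrightarrow> tdeg E p \<noteq> 2"
    and noF2: "\<And>v. is_major V E v \<Longrightarrow> card {l \<in> Lf. E v l} \<noteq> 1"
    and w: "w \<in> V" "w \<notin> Lf" "\<And>u. E w u \<Longrightarrow> u \<notin> Lf"
  shows "real (card Lf) / 2 + 1/4 \<le> frac_dim1 V E"
proof (rule frac_dim1_ge)
  fix h assume hr: "resolving_fun1 V E h"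
  interpret L: tlow V E h by unfold_locales (rule hr)
  have all2: "card (L.Lp p) \<ge> 2" if p: "p \<in> L.P" for p
  proof -
    obtain l where l: "l \<in> Lf" "E p l" and pV: "p \<in> V" and pL: "p \<notin> Lf"
      using p unfolding L.P_def by blast
    have "tdeg E p \<noteq> 2" using noF1[OF l(1) Esym[OF l(2)]] .
    moreover have "tdeg E p \<noteq> 1" using pL pV unfolding Lf_def by auto
    moreover have "tdeg E p \<noteq> 0" using l(2) nb_fin[of p] unfolding tdeg_nb nb_def by auto
    ultimately have "is_major V E p" unfolding is_major_def using pV by simp
    then have "card (L.Lp p) \<noteq> 1" using noF2 unfolding L.Lp_def by simp
    moreover have "card (L.Lp p) \<noteq> 0" using L.Lp_ne[OF p] L.Lp_fin by simp
    ultimately show ?thesis by simp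
  qed
  have "w \<in> L.W" unfolding L.W_def L.P_def using w by auto
  then show "real (card Lf) / 2 + 1/4 \<le> sum h V" using L.LB_C[OF all2] by blast
qed

lemma lb_A:
  assumes v: "is_major V E v" and vl: "{l \<in> Lf. E v l} = {l0}"
  shows "real (card Lf) / 2 \<le> frac_dim1 V E"
proof (rule frac_dim1_ge)
  fix h assume hr: "resolving_fun1 V E h"
  interpret L: tlow V E h by unfold_locales (rule hr)
  have vV: "v \<in> V" and dv: "card (nb v) \<ge> 3" using v unfolding is_major_def tdeg_nb by auto
  have vL: "v \<notin> Lf" using v unfolding is_major_def Lf_def by auto
  have l0: "l0 \<in> Lf" "E v l0" using vl by auto
  have vP: "v \<in> L.P" unfolding L.P_def using vV vL l0 by blast
  have "nb v - {l0} \<noteq> {}"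
  proof
    assume "nb v - {l0} = {}"
    then have "nb v \<subseteq> {l0}" by blast
    then have "card (nb v) \<le> card {l0}" by (intro card_mono) auto
    then show False using dv by simp
  qed
  then obtain u where u: "u \<in> nb v" "u \<noteq> l0" by blast
  have evu: "E v u" using u unfolding nb_def by simp
  have uV: "u \<in> V" using evu Ein by auto
  have uL: "u \<notin> Lf" using vl u evu by blast
  have "d u u < d v u" using d_edge[OF evu] by simp
  then obtain z where z: "z \<in> Lf" "d u z < d v z" using side_leaf[OF uV vV uV] by blast
  have zV: "z \<in> V" using z unfolding Lf_def by simp
  have pz: "par z \<noteq> v"
  proof
    assume "par z = v"
    then have "E v z" using Esym[OF par(1)[OF z(1)]] by simp
    then have "d v z = 1" using d_edge by simp
    then have "d u z = 0" using z by simp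
    then have "u = z" using d_zero[OF uV zV] by simp
    then show False using uL z by simp
  qed
  have "{v, par z} \<subseteq> L.P" using vP L.par_P[OF z(1)] by simp
  then have "card {v, par z} \<le> card L.P" using L.P_fin by (intro card_mono)
  moreover have "card {v, par z} = 2" using pz by simp
  ultimately show "real (card Lf) / 2 \<le> sum h V" using L.LB_A by simp
qed

lemma good:
  assumes eq: "frac_dim1 V E = frac_dim V E"
  shows "(\<forall>l p. l \<in> Lf \<longrightarrow> E l p \<longrightarrow> tdeg E p \<noteq> 2)
    \<and> (\<forall>v. is_major V E v \<longrightarrow> card {l \<in> Lf. E v l} \<noteq> 1)
    \<and> (\<forall>w \<in> V. w \<notin> Lf \<longrightarrow> (\<exists>u. E w u \<and> u \<in> Lf))"
proof -
  have up1: "frac_dim V E \<le> real (card Lf) / 2" using dim_upper1 .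
  have F1: "\<forall>l p. l \<in> Lf \<longrightarrow> E l p \<longrightarrow> tdeg E p \<noteq> 2"
  proof (intro allI impI notI)
    fix l p assume "l \<in> Lf" "E l p" "tdeg E p = 2"
    from lb_B[OF this] up1 eq show False by simp
  qed
  have F2: "\<forall>v. is_major V E v \<longrightarrow> card {l \<in> Lf. E v l} \<noteq> 1"
  proof (intro allI impI notI)
    fix v assume v: "is_major V E v" and c: "card {l \<in> Lf. E v l} = 1"
    then obtain l0 where vl: "{l \<in> Lf. E v l} = {l0}" by (auto simp: card_1_singleton_iff)
    have a: "frac_dim V E \<le> real (card Lf - 1) / 2"
      using caseA_upper[OF _ v vl] F1 by auto
    have "card Lf \<ge> 1" using three_leaves by simp
    then have "real (card Lf - 1) = real (card Lf) - 1" by (simp add: of_nat_diff)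
    then have "frac_dim V E \<le> (real (card Lf) - 1) / 2" using a by simp
    with lb_A[OF v vl] eq show False by simp
  qed
  have F3: "\<forall>w \<in> V. w \<notin> Lf \<longrightarrow> (\<exists>u. E w u \<and> u \<in> Lf)"
  proof (intro ballI impI)
    fix w assume w: "w \<in> V" "w \<notin> Lf"
    show "\<exists>u. E w u \<and> u \<in> Lf"
    proof (rule ccontr)
      assume "\<not> (\<exists>u. E w u \<and> u \<in> Lf)"
      then have "\<And>u. E w u \<Longrightarrow> u \<notin> Lf" by blast
      from lb_C[of w, OF _ _ w this] F1 F2 up1 eq show False by force
    qed
  qed
  show ?thesis using F1 F2 F3 by blast
qed

end

theorem lemma3p15:
  fixes V :: "'a set" and E :: "'a \<Rightarrow> 'a \<Rightarrow> bool"
  assumes "is_tree V E"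
    and "ex_num V E \<ge> 1"
    and "frac_dim1 V E = frac_dim V E"
  shows "(\<forall>v\<in>M2 V E. \<forall>l. is_terminal V E l v \<longrightarrow> E v l)
     \<and> \<not> (\<exists>v. is_major V E v \<and> ter V E v = 1)
     \<and> \<not> (\<exists>v. is_major V E v \<and> ter V E v = 0)
     \<and> \<not> (\<exists>u. interior_deg2 V E u)"
proof -
  interpret T: tctx V E by unfold_locales (rule assms(1))
  have "ext_major V E \<noteq> {}" using assms(2) unfolding ex_num_def by auto
  then have maj: "\<exists>v. is_major V E v" unfolding ext_major_def by auto
  interpret T2: tctx2 V E by unfold_locales (rule maj)
  have G: "\<And>l p. l \<in> T2.Lf \<Longrightarrow> E l p \<Longrightarrow> tdeg E p \<noteq> 2"
    "\<And>v. is_major V E v \<Longrightarrow> card {l \<in> T2.Lf. E v l} \<noteq> 1"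
    "\<And>w. w \<in> V \<Longrightarrow> w \<notin> T2.Lf \<Longrightarrow> \<exists>u. E w u \<and> u \<in> T2.Lf"
    using T2.good[OF assms(3)] by blast+
  have parmaj: "is_major V E (T2.par l)" if l: "l \<in> T2.Lf" for l
  proof -
    have e: "E l (T2.par l)" using T2.par(1)[OF l] .
    have pV: "T2.par l \<in> V" using e T.Ein by auto
    have pL: "T2.par l \<notin> T2.Lf" using T2.par_notleaf[OF l] .
    have "tdeg E (T2.par l) \<noteq> 2" using G(1)[OF l e] .
    moreover have "tdeg E (T2.par l) \<noteq> 1" using pL pV unfolding T2.Lf_def by auto
    moreover have "tdeg E (T2.par l) \<noteq> 0" using T.Esym[OF e] T.nb_fin[of "T2.par l"]
      unfolding T.tdeg_nb T.nb_def by auto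
    ultimately show ?thesis unfolding is_major_def using pV by simp
  qed
  have leafL: "l \<in> T2.Lf" if "is_leaf V E l" for l using that unfolding is_leaf_def T2.Lf_def by simp
  have partA: "\<forall>v\<in>M2 V E. \<forall>l. is_terminal V E l v \<longrightarrow> E v l"
  proof (intro ballI allI impI)
    fix v l assume "v \<in> M2 V E" and t: "is_terminal V E l v"
    have l: "l \<in> T2.Lf" using t leafL unfolding is_terminal_def by blast
    have v: "is_major V E v" using t unfolding is_terminal_def by blast
    define p where "p = T2.par l"
    have e: "E l p" unfolding p_def using T2.par(1)[OF l] .
    have "p = v"
    proof (rule ccontr)
      assume "p \<noteq> v"
      then have "T.d l v < T.d l p" using t parmaj[OF l] unfolding is_terminal_def p_def by blast
      then have "T.d l v = 0" using T.d_edge[OF e] by simp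
      moreover have "l \<in> V" "v \<in> V" using l v unfolding T2.Lf_def is_major_def by auto
      ultimately have "l = v" using T.d_zero by blast
      then show False using l v unfolding T2.Lf_def is_major_def by simp
    qed
    then show "E v l" using T.Esym[OF e] by simp
  qed
  have ter2: "ter V E v \<ge> 2" if v: "is_major V E v" for v
  proof -
    have vV: "v \<in> V" and vL: "v \<notin> T2.Lf" using v unfolding is_major_def T2.Lf_def by auto
    have sub: "{l \<in> T2.Lf. E v l} \<subseteq> {l. is_terminal V E l v}"
    proof
      fix l assume "l \<in> {l \<in> T2.Lf. E v l}"
      then have l: "l \<in> T2.Lf" and e: "E v l" by auto
      have lV: "l \<in> V" and t1: "tdeg E l = 1" using l unfolding T2.Lf_def by auto
      have nbl: "T.nb l = {v}" using T.leaf_nb[OF t1 T.Esym[OF e]] .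
      have "T.d l v < T.d l w" if w: "is_major V E w" "w \<noteq> v" for w
      proof -
        have wV: "w \<in> V" using w unfolding is_major_def by simp
        have "T.d l v = 1" using T.d_edge[OF T.Esym[OF e]] .
        moreover have "T.d l w \<noteq> 0"
        proof
          assume "T.d l w = 0"
          then have "l = w" using T.d_zero[OF lV wV] by simp
          then show False using w t1 unfolding is_major_def by simp
        qed
        moreover have "T.d l w \<noteq> 1"
        proof
          assume "T.d l w = 1"
          then have "E l w" using T.d_one[OF lV wV] by simp
          then have "w \<in> T.nb l" unfolding T.nb_def by simp
          then show False using nbl w by simp
        qed
        ultimately show ?thesis by simp
      qed
      then show "l \<in> {l. is_terminal V E l v}"
        unfolding is_terminal_def is_leaf_def using lV t1 v by auto
    qed
    have "finite {l. is_terminal V E l v}"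
      using T.finV by (rule finite_subset[rotated]) (auto simp: is_terminal_def is_leaf_def)
    then have c: "card {l \<in> T2.Lf. E v l} \<le> ter V E v" unfolding ter_def using sub by (rule card_mono)
    obtain u where "E v u" "u \<in> T2.Lf" using G(3)[OF vV vL] by blast
    then have "card {l \<in> T2.Lf. E v l} \<noteq> 0" using T2.Lf_fin by auto
    moreover have "card {l \<in> T2.Lf. E v l} \<noteq> 1" using G(2)[OF v] .
    ultimately show ?thesis using c by simp
  qed
  have partC: "\<not> (\<exists>u. interior_deg2 V E u)"
  proof
    assume "\<exists>u. interior_deg2 V E u"
    then obtain u where u: "u \<in> V" "tdeg E u = 2" unfolding interior_deg2_def by blast
    then have "u \<notin> T2.Lf" unfolding T2.Lf_def by simp
    then obtain l where "E u l" "l \<in> T2.Lf" using G(3)[OF u(1)] by blast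
    then show False using G(1)[of l u] T.Esym u(2) by blast
  qed
  show ?thesis using partA ter2 partC by fastforce
qed


end
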